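(* For all $u,v,x,y\in H$: (i) $T(u\otimes v\otimes x\otimes A^*y)=\bar T(y\otimes u\otimes Av\otimes x)$; (ii) $T(u\otimes x\otimes v\otimes y)=\bar T(u\otimes Av\otimes Bx\otimes y)$; (iii) $T(u\otimes v\otimes x\otimes y)=\bar T(v\otimes Bx\otimes y\otimes B^*u)$.
   Context: Let $\mathcal C$ be a strict monoidal category with tensor product $\boxtimes$ and unit object $\mathbb I$ which is an Ab-category (all Hom-sets are abelian groups, composition and $\boxtimes$ are biadditive) whose ground ring $\mathsf k=\operatorname{End}(\mathbb I)$ is a field; each $\operatorname{Hom}(V,W)$ is a $\mathsf k$-vector space via $kf=k\boxtimes f$, and $\boxtimes$ is $\mathsf k$-bilinear on morphisms. An object $V$ is simple if $\operatorname{End}(V)=\mathsf k\,\mathrm{Id}_V$; for such $V$ and $f\in\operatorname{End}(V)$, $\langle f\rangle\in\mathsf k$ denotes the scalar with $f=\langle f\rangle\mathrm{Id}_V$. For objects $V_i$ write $H^{ij}_k=\operatorname{Hom}(V_k,V_i\boxtimes V_j)$ and $H^k_{ij}=\operatorname{Hom}(V_i\boxtimes V_j,V_k)$. A $\Psi$-system in $\mathcal C$ consists of (1) a family of simple objects $\{V_i\}_{i\in I}$ with $\operatorname{Hom}(V_i,V_j)=0$ for $i\neq j$; (2) an involution $i\mapsto i^*$ of $I$; (3) morphisms $b_i:\mathbb I\to V_i\boxtimes V_{i^*}$, $d_i:V_i\boxtimes V_{i^*}\to\mathbb I$ ($i\in I$) with $(\mathrm{Id}_{V_i}\boxtimes d_{i^*})(b_i\boxtimes\mathrm{Id}_{V_i})=\mathrm{Id}_{V_i}$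 and $(d_i\boxtimes\mathrm{Id}_{V_i})(\mathrm{Id}_{V_i}\boxtimes b_{i^*})=\mathrm{Id}_{V_i}$; (4) for all $i,j\in I$ such that $H^{ij}_k\neq0$ for some $k\in I$, the morphism $\mathrm{Id}_{V_i\boxtimes V_j}$ lies in the image of the linear map $\bigoplus_{k\in I}H^{ij}_k\otimes_{\mathsf k}H^k_{ij}\to\operatorname{End}(V_i\boxtimes V_j)$, $x\otimes y\mapsto x\circ y$. Fix a $\Psi$-system in $\mathcal C$. Let $\hat H=\bigoplus_{i,j,k\in I}H^k_{ij}$, $\check H=\bigoplus_{i,j,k\in I}H^{ij}_k$, $H=\hat H\oplus\check H$, and let $\pi^k_{ij}:H\to H^k_{ij}$, $\pi^{ij}_k:H\to H^{ij}_k$ be the projections. Define $A,B\in\operatorname{End}_{\mathsf k}(H)$ by $Ax=\sum_{i,j,k\in I}\big((\mathrm{Id}_{V_{i^*}}\boxtimes\pi^k_{ij}x)(b_{i^*}\boxtimes\mathrm{Id}_{V_j})+(d_{i^*}\boxtimes\mathrm{Id}_{V_j})(\mathrm{Id}_{V_{i^*}}\boxtimes\pi^{ij}_kx)\big)$, $Bx=\sum_{i,j,k\in I}\big((\pi^k_{ij}x\boxtimes\mathrm{Id}_{V_{j^*}})(\mathrm{Id}_{V_i}\boxtimes b_j)+(\mathrm{Id}_{V_i}\boxtimes d_j)(\pi^{ij}_kx\boxtimes\mathrm{Id}_{V_{j^*}})\big)$. Define the symmetric bilinear form on $H$: $\langle x,y\rangle=\sum_{i,j,k\in I}\big(\langle\pi^k_{ij}x\circ\pi^{ij}_ky\rangle+\langle\pi^k_{ij}y\circ\pi^{ij}_kx\rangle\big)$.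 A transpose of $f\in\operatorname{End}(H)$ is the (unique) $f^*\in\operatorname{End}(H)$ with $\langle fx,y\rangle=\langle x,f^*y\rangle$ for all $x,y\in H$; $A^*$, $B^*$ denote the transposes of $A$, $B$ (which exist). Define linear forms $T,\bar T:H^{\otimes4}\to\mathsf k$ (tensor products over $\mathsf k$) by $T(u\otimes v\otimes x\otimes y)=\sum_{i,j,k,l,m,n\in I}\big\langle \pi^m_{kl}u\circ(\pi^k_{ij}v\boxtimes\mathrm{Id}_{V_l})\circ(\mathrm{Id}_{V_i}\boxtimes\pi^{jl}_nx)\circ\pi^{in}_my\big\rangle$, $\bar T(u\otimes v\otimes x\otimes y)=\sum_{i,j,k,l,m,n\in I}\big\langle\pi^m_{in}u\circ(\mathrm{Id}_{V_i}\boxtimes\pi^n_{jl}v)\circ(\pi^{ij}_kx\boxtimes\mathrm{Id}_{V_l})\circ\pi^{kl}_my\big\rangle$ (only finitely many terms are nonzero). *)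

theory Defs
  imports Main
begin

section \<open>Strict monoidal Ab-categories (encoded concretely)\<close>

text \<open>A category is given by a set of objects, a set of morphisms with domain and
codomain maps, composition (cmp g f = g o f), identities, a strict tensor product
on objects and morphisms with unit object, and an abelian group structure on each
Hom-set (addition madd, zero mzero a b, negation mneg).\<close>

record ('o, 'm) mcat =
  Ob   :: "'o set"
  Mor  :: "'m set"
  dom  :: "'m \<Rightarrow> 'o"
  cod  :: "'m \<Rightarrow> 'o"
  cmp  :: "'m \<Rightarrow> 'm \<Rightarrow> 'm"
  idm  :: "'o \<Rightarrow> 'm"
  tno  :: "'o \<Rightarrow> 'o \<Rightarrow> 'o"
  tnm  :: "'m \<Rightarrow> 'm \<Rightarrow> 'm"
  unit :: "'o"
  madd :: "'m \<Rightarrow> 'm \<Rightarrow> 'm"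
  mzero :: "'o \<Rightarrow> 'o \<Rightarrow> 'm"
  mneg :: "'m \<Rightarrow> 'm"

definition Hom :: "('o, 'm) mcat \<Rightarrow> 'o \<Rightarrow> 'o \<Rightarrow> 'm set" where
  "Hom C a b = {f \<in> Mor C. dom C f = a \<and> cod C f = b}"

definition is_category :: "('o, 'm) mcat \<Rightarrow> bool" where
  "is_category C \<longleftrightarrow>
     (\<forall>f\<in>Mor C. dom C f \<in> Ob C \<and> cod C f \<in> Ob C) \<and>
     (\<forall>a\<in>Ob C. idm C a \<in> Hom C a a) \<and>
     (\<forall>a\<in>Ob C. \<forall>b\<in>Ob C. \<forall>c\<in>Ob C. \<forall>f\<in>Hom C a b. \<forall>g\<in>Hom C b c.
         cmp C g f \<in> Hom C a c) \<and>
     (\<forall>a\<in>Ob C. \<forall>b\<in>Ob C. \<forall>c\<in>Ob C. \<forall>e\<in>Ob C. \<forall>f\<in>Hom C a b. \<forall>g\<in>Hom C b c. \<forall>h\<in>Hom C c e.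
         cmp C h (cmp C g f) = cmp C (cmp C h g) f) \<and>
     (\<forall>a\<in>Ob C. \<forall>b\<in>Ob C. \<forall>f\<in>Hom C a b.
         cmp C f (idm C a) = f \<and> cmp C (idm C b) f = f)"

definition is_strict_monoidal :: "('o, 'm) mcat \<Rightarrow> bool" where
  "is_strict_monoidal C \<longleftrightarrow>
     unit C \<in> Ob C \<and>
     (\<forall>a\<in>Ob C. \<forall>b\<in>Ob C. tno C a b \<in> Ob C) \<and>
     (\<forall>a\<in>Ob C. \<forall>b\<in>Ob C. \<forall>c\<in>Ob C. \<forall>e\<in>Ob C. \<forall>f\<in>Hom C a b. \<forall>g\<in>Hom C c e.
         tnm C f g \<in> Hom C (tno C a c) (tno C b e)) \<and>
     (\<forall>a\<in>Ob C. \<forall>b\<in>Ob C. \<forall>c\<in>Ob C. tno C (tno C a b) c = tno C a (tno C b c)) \<and>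
     (\<forall>a\<in>Ob C. tno C (unit C) a = a \<and> tno C a (unit C) = a) \<and>
     (\<forall>f\<in>Mor C. \<forall>g\<in>Mor C. \<forall>h\<in>Mor C. tnm C (tnm C f g) h = tnm C f (tnm C g h)) \<and>
     (\<forall>f\<in>Mor C. tnm C (idm C (unit C)) f = f \<and> tnm C f (idm C (unit C)) = f) \<and>
     (\<forall>a\<in>Ob C. \<forall>b\<in>Ob C. tnm C (idm C a) (idm C b) = idm C (tno C a b)) \<and>
     (\<forall>a\<in>Ob C. \<forall>b\<in>Ob C. \<forall>c\<in>Ob C. \<forall>a'\<in>Ob C. \<forall>b'\<in>Ob C. \<forall>c'\<in>Ob C.
       \<forall>f\<in>Hom C a b. \<forall>g\<in>Hom C b c. \<forall>f'\<in>Hom C a' b'. \<forall>g'\<in>Hom C b' c'.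
         tnm C (cmp C g f) (cmp C g' f') = cmp C (tnm C g g') (tnm C f f'))"

definition is_Ab_category :: "('o, 'm) mcat \<Rightarrow> bool" where
  "is_Ab_category C \<longleftrightarrow>
     (\<forall>a\<in>Ob C. \<forall>b\<in>Ob C.
        mzero C a b \<in> Hom C a b \<and>
        (\<forall>f\<in>Hom C a b. \<forall>g\<in>Hom C a b. madd C f g \<in> Hom C a b) \<and>
        (\<forall>f\<in>Hom C a b. mneg C f \<in> Hom C a b) \<and>
        (\<forall>f\<in>Hom C a b. \<forall>g\<in>Hom C a b. \<forall>h\<in>Hom C a b.
            madd C (madd C f g) h = madd C f (madd C g h)) \<and>
        (\<forall>f\<in>Hom C a b. \<forall>g\<in>Hom C a b. madd C f g = madd C g f) \<and>
        (\<forall>f\<in>Hom C a b. madd C (mzero C a b) f = f) \<and>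
        (\<forall>f\<in>Hom C a b. madd C (mneg C f) f = mzero C a b)) \<and>
     (\<forall>a\<in>Ob C. \<forall>b\<in>Ob C. \<forall>c\<in>Ob C. \<forall>f\<in>Hom C a b. \<forall>f'\<in>Hom C a b. \<forall>g\<in>Hom C b c. \<forall>g'\<in>Hom C b c.
        cmp C (madd C g g') f = madd C (cmp C g f) (cmp C g' f) \<and>
        cmp C g (madd C f f') = madd C (cmp C g f) (cmp C g f')) \<and>
     (\<forall>a\<in>Ob C. \<forall>b\<in>Ob C. \<forall>c\<in>Ob C. \<forall>e\<in>Ob C. \<forall>f\<in>Hom C a b. \<forall>f'\<in>Hom C a b. \<forall>g\<in>Hom C c e. \<forall>g'\<in>Hom C c e.
        tnm C (madd C f f') g = madd C (tnm C f g) (tnm C f' g) \<and>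
        tnm C f (madd C g g') = madd C (tnm C f g) (tnm C f g'))"

text \<open>The ground ring k = End(unit) (addition madd, multiplication cmp) is a field,
and the tensor product is k-bilinear for the action  k f = k \<boxtimes> f.\<close>

definition ground_field :: "('o, 'm) mcat \<Rightarrow> bool" where
  "ground_field C \<longleftrightarrow>
     idm C (unit C) \<noteq> mzero C (unit C) (unit C) \<and>
     (\<forall>k\<in>Hom C (unit C) (unit C). \<forall>l\<in>Hom C (unit C) (unit C). cmp C k l = cmp C l k) \<and>
     (\<forall>k\<in>Hom C (unit C) (unit C). k \<noteq> mzero C (unit C) (unit C) \<longrightarrow>
         (\<exists>l\<in>Hom C (unit C) (unit C). cmp C l k = idm C (unit C)))"

definition k_bilinear_tensor :: "('o, 'm) mcat \<Rightarrow> bool" where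
  "k_bilinear_tensor C \<longleftrightarrow>
     (\<forall>k\<in>Hom C (unit C) (unit C). \<forall>f\<in>Mor C. \<forall>g\<in>Mor C.
        tnm C (tnm C k f) g = tnm C k (tnm C f g) \<and>
        tnm C f (tnm C k g) = tnm C k (tnm C f g))"

definition strict_monoidal_Ab_cat :: "('o, 'm) mcat \<Rightarrow> bool" where
  "strict_monoidal_Ab_cat C \<longleftrightarrow> is_category C \<and> is_strict_monoidal C \<and>
     is_Ab_category C \<and> ground_field C \<and> k_bilinear_tensor C"

text \<open>V is simple iff every endomorphism of V is k \<boxtimes> Id_V for a unique scalar k
(uniqueness is implicit in the paper's notation \<langle>f\<rangle>).\<close>

definition simple_obj :: "('o, 'm) mcat \<Rightarrow> 'o \<Rightarrow> bool" where
  "simple_obj C V \<longleftrightarrow> V \<in> Ob C \<and>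
     (\<forall>f\<in>Hom C V V. \<exists>!k. k \<in> Hom C (unit C) (unit C) \<and> f = tnm C k (idm C V))"

definition scal :: "('o, 'm) mcat \<Rightarrow> 'o \<Rightarrow> 'm \<Rightarrow> 'm" where
  "scal C V f = (THE k. k \<in> Hom C (unit C) (unit C) \<and> f = tnm C k (idm C V))"

fun msum_list :: "('o, 'm) mcat \<Rightarrow> 'o \<Rightarrow> 'o \<Rightarrow> 'm list \<Rightarrow> 'm" where
  "msum_list C a b [] = mzero C a b"
| "msum_list C a b (f # fs) = madd C f (msum_list C a b fs)"

definition psi_system ::
  "('o, 'm) mcat \<Rightarrow> 'i set \<Rightarrow> ('i \<Rightarrow> 'o) \<Rightarrow> ('i \<Rightarrow> 'i) \<Rightarrow> ('i \<Rightarrow> 'm) \<Rightarrow> ('i \<Rightarrow> 'm) \<Rightarrow> bool" where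
  "psi_system C I V st b d \<longleftrightarrow>
     strict_monoidal_Ab_cat C \<and>
     (\<forall>i\<in>I. simple_obj C (V i)) \<and>
     (\<forall>i\<in>I. \<forall>j\<in>I. i \<noteq> j \<longrightarrow> Hom C (V i) (V j) = {mzero C (V i) (V j)}) \<and>
     (\<forall>i\<in>I. st i \<in> I \<and> st (st i) = i) \<and>
     (\<forall>i\<in>I. b i \<in> Hom C (unit C) (tno C (V i) (V (st i))) \<and>
             d i \<in> Hom C (tno C (V i) (V (st i))) (unit C)) \<and>
     (\<forall>i\<in>I. cmp C (tnm C (idm C (V i)) (d (st i))) (tnm C (b i) (idm C (V i))) = idm C (V i) \<and>
             cmp C (tnm C (d i) (idm C (V i))) (tnm C (idm C (V i)) (b (st i))) = idm C (V i)) \<and>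
     (\<forall>i\<in>I. \<forall>j\<in>I.
        (\<exists>k\<in>I. Hom C (V k) (tno C (V i) (V j)) \<noteq> {mzero C (V k) (tno C (V i) (V j))}) \<longrightarrow>
        (\<exists>ps :: ('i \<times> 'm \<times> 'm) list.
           (\<forall>(k, x, y)\<in>set ps. k \<in> I \<and> x \<in> Hom C (V k) (tno C (V i) (V j)) \<and>
                                y \<in> Hom C (tno C (V i) (V j)) (V k)) \<and>
           idm C (tno C (V i) (V j)) =
             msum_list C (tno C (V i) (V j)) (tno C (V i) (V j))
               (map (\<lambda>(k, x, y). cmp C x y) ps)))"

text \<open>An element of H = \<Oplus> H^k_ij \<oplus> \<Oplus> H^ij_k is a pair (hat, check) of families
indexed by (i,j,k) \<in> I^3: hat i j k = \<pi>^k_ij x \<in> Hom(V_i \<boxtimes> V_j, V_k) and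
check i j k = \<pi>^ij_k x \<in> Hom(V_k, V_i \<boxtimes> V_j), with finitely many nonzero components
(canonically undefined outside I^3).\<close>

type_synonym ('i, 'm) Helem = "('i \<Rightarrow> 'i \<Rightarrow> 'i \<Rightarrow> 'm) \<times> ('i \<Rightarrow> 'i \<Rightarrow> 'i \<Rightarrow> 'm)"

definition pihat :: "('i, 'm) Helem \<Rightarrow> 'i \<Rightarrow> 'i \<Rightarrow> 'i \<Rightarrow> 'm" where
  "pihat x i j k = fst x i j k"

definition picheck :: "('i, 'm) Helem \<Rightarrow> 'i \<Rightarrow> 'i \<Rightarrow> 'i \<Rightarrow> 'm" where
  "picheck x i j k = snd x i j k"

definition Hspace :: "('o, 'm) mcat \<Rightarrow> 'i set \<Rightarrow> ('i \<Rightarrow> 'o) \<Rightarrow> ('i, 'm) Helem set" where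
  "Hspace C I V = {x.
     (\<forall>i\<in>I. \<forall>j\<in>I. \<forall>k\<in>I. pihat x i j k \<in> Hom C (tno C (V i) (V j)) (V k) \<and>
                          picheck x i j k \<in> Hom C (V k) (tno C (V i) (V j))) \<and>
     (\<forall>i j k. \<not> (i \<in> I \<and> j \<in> I \<and> k \<in> I) \<longrightarrow>
                 pihat x i j k = undefined \<and> picheck x i j k = undefined) \<and>
     finite {(i, j, k). i \<in> I \<and> j \<in> I \<and> k \<in> I \<and>
                        pihat x i j k \<noteq> mzero C (tno C (V i) (V j)) (V k)} \<and>
     finite {(i, j, k). i \<in> I \<and> j \<in> I \<and> k \<in> I \<and>
                        picheck x i j k \<noteq> mzero C (V k) (tno C (V i) (V j))}}"

definition ksum :: "('o, 'm) mcat \<Rightarrow> ('a \<Rightarrow> 'm) \<Rightarrow> 'a set \<Rightarrow> 'm" where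
  "ksum C f S = Finite_Set.fold (\<lambda>a acc. madd C (f a) acc) (mzero C (unit C) (unit C))
                  {a \<in> S. f a \<noteq> mzero C (unit C) (unit C)}"

text \<open>Each summand of the defining sums lies in a single
component of H; we record the resulting components. The summand indexed by (i,j,k)
of A lands in H^{i* k}_j (first term) resp. H^j_{i* k} (second term); that of B in
H^{k j*}_i resp. H^i_{k j*}.\<close>

definition opA :: "('o, 'm) mcat \<Rightarrow> 'i set \<Rightarrow> ('i \<Rightarrow> 'o) \<Rightarrow> ('i \<Rightarrow> 'i) \<Rightarrow> ('i \<Rightarrow> 'm) \<Rightarrow> ('i \<Rightarrow> 'm)
                      \<Rightarrow> ('i, 'm) Helem \<Rightarrow> ('i, 'm) Helem" where
  "opA C I V st b d x =
     ((\<lambda>p q r. if p \<in> I \<and> q \<in> I \<and> r \<in> I then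
          cmp C (tnm C (d p) (idm C (V r))) (tnm C (idm C (V p)) (picheck x (st p) r q))
        else undefined),
      (\<lambda>p q r. if p \<in> I \<and> q \<in> I \<and> r \<in> I then
          cmp C (tnm C (idm C (V p)) (pihat x (st p) r q)) (tnm C (b p) (idm C (V r)))
        else undefined))"

definition opB :: "('o, 'm) mcat \<Rightarrow> 'i set \<Rightarrow> ('i \<Rightarrow> 'o) \<Rightarrow> ('i \<Rightarrow> 'i) \<Rightarrow> ('i \<Rightarrow> 'm) \<Rightarrow> ('i \<Rightarrow> 'm)
                      \<Rightarrow> ('i, 'm) Helem \<Rightarrow> ('i, 'm) Helem" where
  "opB C I V st b d x =
     ((\<lambda>p q r. if p \<in> I \<and> q \<in> I \<and> r \<in> I then
          cmp C (tnm C (idm C (V r)) (d (st q))) (tnm C (picheck x r (st q) p) (idm C (V q)))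
        else undefined),
      (\<lambda>p q r. if p \<in> I \<and> q \<in> I \<and> r \<in> I then
          cmp C (tnm C (pihat x r (st q) p) (idm C (V q))) (tnm C (idm C (V r)) (b (st q)))
        else undefined))"

definition hform :: "('o, 'm) mcat \<Rightarrow> 'i set \<Rightarrow> ('i \<Rightarrow> 'o) \<Rightarrow> ('i, 'm) Helem \<Rightarrow> ('i, 'm) Helem \<Rightarrow> 'm" where
  "hform C I V x y = ksum C (\<lambda>(i, j, k).
       madd C (scal C (V k) (cmp C (pihat x i j k) (picheck y i j k)))
              (scal C (V k) (cmp C (pihat y i j k) (picheck x i j k))))
     (I \<times> I \<times> I)"

definition transp :: "('o, 'm) mcat \<Rightarrow> 'i set \<Rightarrow> ('i \<Rightarrow> 'o)
                       \<Rightarrow> (('i, 'm) Helem \<Rightarrow> ('i, 'm) Helem) \<Rightarrow> ('i, 'm) Helem \<Rightarrow> ('i, 'm) Helem" where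
  "transp C I V f y = (THE z. z \<in> Hspace C I V \<and>
       (\<forall>x\<in>Hspace C I V. hform C I V (f x) y = hform C I V x z))"

text \<open>The linear forms T and T-bar, evaluated on pure tensors u \<otimes> v \<otimes> x \<otimes> y.\<close>

definition Tform :: "('o, 'm) mcat \<Rightarrow> 'i set \<Rightarrow> ('i \<Rightarrow> 'o)
     \<Rightarrow> ('i, 'm) Helem \<Rightarrow> ('i, 'm) Helem \<Rightarrow> ('i, 'm) Helem \<Rightarrow> ('i, 'm) Helem \<Rightarrow> 'm" where
  "Tform C I V u v x y = ksum C (\<lambda>(i, j, k, l, m, n).
       scal C (V m)
         (cmp C (pihat u k l m)
           (cmp C (tnm C (pihat v i j k) (idm C (V l)))
             (cmp C (tnm C (idm C (V i)) (picheck x j l n))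
               (picheck y i n m)))))
     (I \<times> I \<times> I \<times> I \<times> I \<times> I)"

definition Tbar :: "('o, 'm) mcat \<Rightarrow> 'i set \<Rightarrow> ('i \<Rightarrow> 'o)
     \<Rightarrow> ('i, 'm) Helem \<Rightarrow> ('i, 'm) Helem \<Rightarrow> ('i, 'm) Helem \<Rightarrow> ('i, 'm) Helem \<Rightarrow> 'm" where
  "Tbar C I V u v x y = ksum C (\<lambda>(i, j, k, l, m, n).
       scal C (V m)
         (cmp C (pihat u i n m)
           (cmp C (tnm C (idm C (V i)) (pihat v j l n))
             (cmp C (tnm C (picheck x i j k) (idm C (V l)))
               (picheck y k l m)))))
     (I \<times> I \<times> I \<times> I \<times> I \<times> I)"

end

theory Submission
  imports Defs
begin

locale psi =
  fixes C :: "('o,'m) mcat" and I :: "'i set" and V :: "'i \<Rightarrow> 'o"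
    and st :: "'i \<Rightarrow> 'i" and b d :: "'i \<Rightarrow> 'm"
  assumes psi: "psi_system C I V st b d"
begin

abbreviation "U \<equiv> unit C"
abbreviation "K \<equiv> Hom C U U"
abbreviation "M \<equiv> Mor C"
abbreviation "Ob' \<equiv> Ob C"
abbreviation "dm \<equiv> dom C"
abbreviation "cd \<equiv> cod C"
abbreviation "cp \<equiv> cmp C"
abbreviation "tm \<equiv> tnm C"
abbreviation "to \<equiv> tno C"
abbreviation "ii \<equiv> idm C"
abbreviation "ad \<equiv> madd C"
abbreviation "zr \<equiv> mzero C"

lemma cat: "is_category C" and mon: "is_strict_monoidal C" and ab: "is_Ab_category C"
  and gf: "ground_field C" and kb: "k_bilinear_tensor C"
  using psi unfolding psi_system_def strict_monoidal_Ab_cat_def by auto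

lemma Hom_iff[simp]: "f \<in> Hom C a c \<longleftrightarrow> f \<in> M \<and> dm f = a \<and> cd f = c"
  by (auto simp: Hom_def)

lemma dom_ob[simp]: "f \<in> M \<Longrightarrow> dm f \<in> Ob'" and cod_ob[simp]: "f \<in> M \<Longrightarrow> cd f \<in> Ob'"
  using cat unfolding is_category_def by auto

lemma unit_ob[simp]: "U \<in> Ob'" using mon unfolding is_strict_monoidal_def by auto
lemma tno_ob[simp]: "a \<in> Ob' \<Longrightarrow> c \<in> Ob' \<Longrightarrow> to a c \<in> Ob'"
  using mon unfolding is_strict_monoidal_def by auto
lemma V_ob[simp]: "i \<in> I \<Longrightarrow> V i \<in> Ob'"
  using psi unfolding psi_system_def simple_obj_def by auto
lemma st_I[simp]: "i \<in> I \<Longrightarrow> st i \<in> I" and st_st[simp]: "i \<in> I \<Longrightarrow> st (st i) = i"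
  using psi unfolding psi_system_def by auto

lemma tno_assoc[simp]: "a \<in> Ob' \<Longrightarrow> c \<in> Ob' \<Longrightarrow> e \<in> Ob' \<Longrightarrow> to (to a c) e = to a (to c e)"
  using mon unfolding is_strict_monoidal_def by auto
lemma tno_unit_l[simp]: "a \<in> Ob' \<Longrightarrow> to U a = a" and tno_unit_r[simp]: "a \<in> Ob' \<Longrightarrow> to a U = a"
  using mon unfolding is_strict_monoidal_def by auto

lemma id_M[simp]: "a \<in> Ob' \<Longrightarrow> ii a \<in> M" and id_dom[simp]: "a \<in> Ob' \<Longrightarrow> dm (ii a) = a"
  and id_cod[simp]: "a \<in> Ob' \<Longrightarrow> cd (ii a) = a"
  using cat unfolding is_category_def by auto

lemma cp_all: assumes "f \<in> M" "g \<in> M" "dm g = cd f"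
  shows "cp g f \<in> M \<and> dm (cp g f) = dm f \<and> cd (cp g f) = cd g"
proof -
  have "\<forall>a\<in>Ob'. \<forall>b\<in>Ob'. \<forall>c\<in>Ob'. \<forall>f\<in>Hom C a b. \<forall>g\<in>Hom C b c. cp g f \<in> Hom C a c"
    using cat unfolding is_category_def by blast
  from this[rule_format, of "dm f" "cd f" "cd g" f g] assms show ?thesis by auto
qed
lemma cp_M[simp]: "f \<in> M \<Longrightarrow> g \<in> M \<Longrightarrow> dm g = cd f \<Longrightarrow> cp g f \<in> M"
  and cp_dom[simp]: "f \<in> M \<Longrightarrow> g \<in> M \<Longrightarrow> dm g = cd f \<Longrightarrow> dm (cp g f) = dm f"
  and cp_cod[simp]: "f \<in> M \<Longrightarrow> g \<in> M \<Longrightarrow> dm g = cd f \<Longrightarrow> cd (cp g f) = cd g"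
  using cp_all by auto

lemma tm_all: assumes "f \<in> M" "g \<in> M"
  shows "tm f g \<in> M \<and> dm (tm f g) = to (dm f) (dm g) \<and> cd (tm f g) = to (cd f) (cd g)"
proof -
  have "\<forall>a\<in>Ob'. \<forall>b\<in>Ob'. \<forall>c\<in>Ob'. \<forall>e\<in>Ob'. \<forall>f\<in>Hom C a b. \<forall>g\<in>Hom C c e.
         tm f g \<in> Hom C (to a c) (to b e)"
    using mon[unfolded is_strict_monoidal_def] by (elim conjE) assumption
  from this[rule_format, of "dm f" "cd f" "dm g" "cd g" f g] assms show ?thesis by auto
qed
lemma tm_M[simp]: "f \<in> M \<Longrightarrow> g \<in> M \<Longrightarrow> tm f g \<in> M"
  and tm_dom[simp]: "f \<in> M \<Longrightarrow> g \<in> M \<Longrightarrow> dm (tm f g) = to (dm f) (dm g)"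
  and tm_cod[simp]: "f \<in> M \<Longrightarrow> g \<in> M \<Longrightarrow> cd (tm f g) = to (cd f) (cd g)"
  using tm_all by auto

lemma ab_all: "\<forall>a\<in>Ob'. \<forall>c\<in>Ob'.
        zr a c \<in> Hom C a c \<and>
        (\<forall>f\<in>Hom C a c. \<forall>g\<in>Hom C a c. ad f g \<in> Hom C a c) \<and>
        (\<forall>f\<in>Hom C a c. mneg C f \<in> Hom C a c) \<and>
        (\<forall>f\<in>Hom C a c. \<forall>g\<in>Hom C a c. \<forall>h\<in>Hom C a c.
            ad (ad f g) h = ad f (ad g h)) \<and>
        (\<forall>f\<in>Hom C a c. \<forall>g\<in>Hom C a c. ad f g = ad g f) \<and>
        (\<forall>f\<in>Hom C a c. ad (zr a c) f = f) \<and>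
        (\<forall>f\<in>Hom C a c. ad (mneg C f) f = zr a c)"
    using ab[unfolded is_Ab_category_def] by (elim conjE) assumption

lemma ab_inst: "a \<in> Ob' \<Longrightarrow> c \<in> Ob' \<Longrightarrow> zr a c \<in> Hom C a c \<and>
        (\<forall>f\<in>Hom C a c. \<forall>g\<in>Hom C a c. ad f g \<in> Hom C a c) \<and>
        (\<forall>f\<in>Hom C a c. mneg C f \<in> Hom C a c) \<and>
        (\<forall>f\<in>Hom C a c. \<forall>g\<in>Hom C a c. \<forall>h\<in>Hom C a c.
            ad (ad f g) h = ad f (ad g h)) \<and>
        (\<forall>f\<in>Hom C a c. \<forall>g\<in>Hom C a c. ad f g = ad g f) \<and>
        (\<forall>f\<in>Hom C a c. ad (zr a c) f = f) \<and>
        (\<forall>f\<in>Hom C a c. ad (mneg C f) f = zr a c)"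
  by (rule bspec[OF bspec[OF ab_all]])
lemma zr_hom: "a \<in> Ob' \<Longrightarrow> c \<in> Ob' \<Longrightarrow> zr a c \<in> Hom C a c"
  using ab_inst by blast

lemma zr_M[simp]: "a \<in> Ob' \<Longrightarrow> c \<in> Ob' \<Longrightarrow> zr a c \<in> M"
  and zr_dom[simp]: "a \<in> Ob' \<Longrightarrow> c \<in> Ob' \<Longrightarrow> dm (zr a c) = a"
  and zr_cod[simp]: "a \<in> Ob' \<Longrightarrow> c \<in> Ob' \<Longrightarrow> cd (zr a c) = c"
  using zr_hom by auto

lemma ad_all: assumes "f \<in> M" "g \<in> M" "dm g = dm f" "cd g = cd f"
  shows "ad f g \<in> M \<and> dm (ad f g) = dm f \<and> cd (ad f g) = cd f"
  using ab_inst[of "dm f" "cd f"] assms by auto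
lemma ad_M[simp]: "f \<in> M \<Longrightarrow> g \<in> M \<Longrightarrow> dm g = dm f \<Longrightarrow> cd g = cd f \<Longrightarrow> ad f g \<in> M"
  and ad_dom[simp]: "f \<in> M \<Longrightarrow> g \<in> M \<Longrightarrow> dm g = dm f \<Longrightarrow> cd g = cd f \<Longrightarrow> dm (ad f g) = dm f"
  and ad_cod[simp]: "f \<in> M \<Longrightarrow> g \<in> M \<Longrightarrow> dm g = dm f \<Longrightarrow> cd g = cd f \<Longrightarrow> cd (ad f g) = cd f"
  using ad_all by auto

lemma ad_assoc: "f \<in> M \<Longrightarrow> g \<in> M \<Longrightarrow> h \<in> M \<Longrightarrow> dm g = dm f \<Longrightarrow> cd g = cd f \<Longrightarrow>
   dm h = dm f \<Longrightarrow> cd h = cd f \<Longrightarrow> ad (ad f g) h = ad f (ad g h)"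
  using ab_inst[of "dm f" "cd f"] by auto
lemma ad_comm: "f \<in> M \<Longrightarrow> g \<in> M \<Longrightarrow> dm g = dm f \<Longrightarrow> cd g = cd f \<Longrightarrow> ad f g = ad g f"
  using ab_inst[of "dm f" "cd f"] by auto
lemma ad_zero_l[simp]: "f \<in> M \<Longrightarrow> a = dm f \<Longrightarrow> c = cd f \<Longrightarrow> ad (zr a c) f = f"
  using ab_inst[of "dm f" "cd f"] by auto
lemma ad_zero_r[simp]: "f \<in> M \<Longrightarrow> a = dm f \<Longrightarrow> c = cd f \<Longrightarrow> ad f (zr a c) = f"
  using ad_comm[of f "zr a c"] by simp
lemma neg_all: "f \<in> M \<Longrightarrow> mneg C f \<in> M \<and> dm (mneg C f) = dm f \<and> cd (mneg C f) = cd f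
     \<and> ad (mneg C f) f = zr (dm f) (cd f)"
  using ab_inst[of "dm f" "cd f"] by auto

lemma idem_zero: assumes "f \<in> M" "ad f f = f" shows "f = zr (dm f) (cd f)"
proof -
  obtain n where n: "n \<in> M" "dm n = dm f" "cd n = cd f" "ad n f = zr (dm f) (cd f)"
    using neg_all[OF assms(1)] by blast
  have "ad n (ad f f) = ad (ad n f) f" using n assms by (intro ad_assoc[symmetric]) auto
  then have "ad n f = ad (zr (dm f) (cd f)) f" using n assms by simp
  also have "\<dots> = f" using assms by (intro ad_zero_l) auto
  finally show ?thesis using n by simp
qed

lemma cp_dist: assumes "a \<in> Ob'" "c \<in> Ob'" "e \<in> Ob'" "f \<in> Hom C a c" "f' \<in> Hom C a c"
   "g \<in> Hom C c e" "g' \<in> Hom C c e"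
  shows "cp (ad g g') f = ad (cp g f) (cp g' f)" "cp g (ad f f') = ad (cp g f) (cp g f')"
proof -
  have "\<forall>a\<in>Ob'. \<forall>b\<in>Ob'. \<forall>c\<in>Ob'. \<forall>f\<in>Hom C a b. \<forall>f'\<in>Hom C a b. \<forall>g\<in>Hom C b c. \<forall>g'\<in>Hom C b c.
        cp (ad g g') f = ad (cp g f) (cp g' f) \<and>
        cp g (ad f f') = ad (cp g f) (cp g f')"
    using ab[unfolded is_Ab_category_def] by (elim conjE) assumption
  note h = this[rule_format, OF assms]
  show "cp (ad g g') f = ad (cp g f) (cp g' f)" using h by (rule conjunct1)
  show "cp g (ad f f') = ad (cp g f) (cp g f')" using h by (rule conjunct2)
qed

lemma cp_ad_l: "f \<in> M \<Longrightarrow> g \<in> M \<Longrightarrow> g' \<in> M \<Longrightarrow> dm g = cd f \<Longrightarrow> dm g' = dm g \<Longrightarrow> cd g' = cd g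
   \<Longrightarrow> cp (ad g g') f = ad (cp g f) (cp g' f)"
  using cp_dist(1)[of "dm f" "cd f" "cd g" f f g g'] by auto
lemma cp_ad_r: "f \<in> M \<Longrightarrow> f' \<in> M \<Longrightarrow> g \<in> M \<Longrightarrow> dm g = cd f \<Longrightarrow> dm f' = dm f \<Longrightarrow> cd f' = cd f
   \<Longrightarrow> cp g (ad f f') = ad (cp g f) (cp g f')"
  using cp_dist(2)[of "dm f" "cd f" "cd g" f f' g g] by auto

lemma tm_dist: assumes "a \<in> Ob'" "c \<in> Ob'" "e \<in> Ob'" "h \<in> Ob'" "f \<in> Hom C a c" "f' \<in> Hom C a c"
   "g \<in> Hom C e h" "g' \<in> Hom C e h"
  shows "tm (ad f f') g = ad (tm f g) (tm f' g)" "tm f (ad g g') = ad (tm f g) (tm f g')"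
proof -
  have "\<forall>a\<in>Ob'. \<forall>b\<in>Ob'. \<forall>c\<in>Ob'. \<forall>e\<in>Ob'. \<forall>f\<in>Hom C a b. \<forall>f'\<in>Hom C a b. \<forall>g\<in>Hom C c e. \<forall>g'\<in>Hom C c e.
        tm (ad f f') g = ad (tm f g) (tm f' g) \<and>
        tm f (ad g g') = ad (tm f g) (tm f g')"
    using ab[unfolded is_Ab_category_def] by (elim conjE) assumption
  note h = this[rule_format, OF assms]
  show "tm (ad f f') g = ad (tm f g) (tm f' g)" using h by (rule conjunct1)
  show "tm f (ad g g') = ad (tm f g) (tm f g')" using h by (rule conjunct2)
qed

lemma tm_ad_l: "f \<in> M \<Longrightarrow> f' \<in> M \<Longrightarrow> g \<in> M \<Longrightarrow> dm f' = dm f \<Longrightarrow> cd f' = cd f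
   \<Longrightarrow> tm (ad f f') g = ad (tm f g) (tm f' g)"
  using tm_dist(1)[of "dm f" "cd f" "dm g" "cd g" f f' g g] by auto
lemma tm_ad_r: "f \<in> M \<Longrightarrow> g \<in> M \<Longrightarrow> g' \<in> M \<Longrightarrow> dm g' = dm g \<Longrightarrow> cd g' = cd g
   \<Longrightarrow> tm f (ad g g') = ad (tm f g) (tm f g')"
  using tm_dist(2)[of "dm f" "cd f" "dm g" "cd g" f f g g'] by auto

lemma cp_zero_r[simp]: assumes "g \<in> M" "a \<in> Ob'" "c = dm g"
  shows "cp g (zr a c) = zr a (cd g)"
proof -
  have "cp g (zr a c) = cp g (ad (zr a c) (zr a c))" using assms by simp
  also have "\<dots> = ad (cp g (zr a c)) (cp g (zr a c))" using assms by (intro cp_ad_r) simp_all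
  finally have "ad (cp g (zr a c)) (cp g (zr a c)) = cp g (zr a c)" by simp
  from idem_zero[OF _ this] assms show ?thesis by simp
qed
lemma cp_zero_l[simp]: assumes "f \<in> M" "e \<in> Ob'" "c = cd f"
  shows "cp (zr c e) f = zr (dm f) e"
proof -
  have "cp (zr c e) f = cp (ad (zr c e) (zr c e)) f" using assms by simp
  also have "\<dots> = ad (cp (zr c e) f) (cp (zr c e) f)" using assms by (intro cp_ad_l) simp_all
  finally have "ad (cp (zr c e) f) (cp (zr c e) f) = cp (zr c e) f" by simp
  from idem_zero[OF _ this] assms show ?thesis by simp
qed
lemma tm_zero_r[simp]: assumes "f \<in> M" "a \<in> Ob'" "c \<in> Ob'"
  shows "tm f (zr a c) = zr (to (dm f) a) (to (cd f) c)"
proof -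
  have "tm f (zr a c) = tm f (ad (zr a c) (zr a c))" using assms by simp
  also have "\<dots> = ad (tm f (zr a c)) (tm f (zr a c))" using assms by (intro tm_ad_r) simp_all
  finally have "ad (tm f (zr a c)) (tm f (zr a c)) = tm f (zr a c)" by simp
  from idem_zero[OF _ this] assms show ?thesis by simp
qed
lemma tm_zero_l[simp]: assumes "f \<in> M" "a \<in> Ob'" "c \<in> Ob'"
  shows "tm (zr a c) f = zr (to a (dm f)) (to c (cd f))"
proof -
  have "tm (zr a c) f = tm (ad (zr a c) (zr a c)) f" using assms by simp
  also have "\<dots> = ad (tm (zr a c) f) (tm (zr a c) f)" using assms by (intro tm_ad_l) simp_all
  finally have "ad (tm (zr a c) f) (tm (zr a c) f) = tm (zr a c) f" by simp
  from idem_zero[OF _ this] assms show ?thesis by simp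
qed

lemma cp_assoc[simp]: "f \<in> M \<Longrightarrow> g \<in> M \<Longrightarrow> h \<in> M \<Longrightarrow> dm g = cd f \<Longrightarrow> dm h = cd g \<Longrightarrow>
   cp (cp h g) f = cp h (cp g f)"
proof -
  assume a: "f \<in> M" "g \<in> M" "h \<in> M" "dm g = cd f" "dm h = cd g"
  have "\<forall>a\<in>Ob'. \<forall>b\<in>Ob'. \<forall>c\<in>Ob'. \<forall>e\<in>Ob'. \<forall>f\<in>Hom C a b. \<forall>g\<in>Hom C b c. \<forall>h\<in>Hom C c e.
         cp h (cp g f) = cp (cp h g) f" using cat unfolding is_category_def by blast
  from this[rule_format, of "dm f" "cd f" "cd g" "cd h" f g h] a show ?thesis by auto
qed

lemma cp_id_both: "f \<in> M \<Longrightarrow> cp f (ii (dm f)) = f \<and> cp (ii (cd f)) f = f"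
proof -
  assume f: "f \<in> M"
  have "\<forall>a\<in>Ob'. \<forall>b\<in>Ob'. \<forall>f\<in>Hom C a b. cp f (ii a) = f \<and> cp (ii b) f = f"
    using cat[unfolded is_category_def] by (elim conjE) assumption
  from this[rule_format, of "dm f" "cd f" f] f show ?thesis by simp
qed
lemma cp_id_r[simp]: "f \<in> M \<Longrightarrow> a = dm f \<Longrightarrow> cp f (ii a) = f"
  and cp_id_l[simp]: "f \<in> M \<Longrightarrow> a = cd f \<Longrightarrow> cp (ii a) f = f"
  using cp_id_both by auto

lemma tm_assoc[simp]: "f \<in> M \<Longrightarrow> g \<in> M \<Longrightarrow> h \<in> M \<Longrightarrow> tm (tm f g) h = tm f (tm g h)"
  using mon unfolding is_strict_monoidal_def by auto
lemma tm_unit_l[simp]: "f \<in> M \<Longrightarrow> tm (ii U) f = f" and tm_unit_r[simp]: "f \<in> M \<Longrightarrow> tm f (ii U) = f"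
  using mon unfolding is_strict_monoidal_def by auto
lemma tm_id_id[simp]: "a \<in> Ob' \<Longrightarrow> c \<in> Ob' \<Longrightarrow> tm (ii a) (ii c) = ii (to a c)"
  using mon unfolding is_strict_monoidal_def by auto

lemma interchange: assumes "f \<in> M" "g \<in> M" "f' \<in> M" "g' \<in> M" "dm g = cd f" "dm g' = cd f'"
  shows "tm (cp g f) (cp g' f') = cp (tm g g') (tm f f')"
proof -
  have "\<forall>a\<in>Ob'. \<forall>b\<in>Ob'. \<forall>c\<in>Ob'. \<forall>a'\<in>Ob'. \<forall>b'\<in>Ob'. \<forall>c'\<in>Ob'.
       \<forall>f\<in>Hom C a b. \<forall>g\<in>Hom C b c. \<forall>f'\<in>Hom C a' b'. \<forall>g'\<in>Hom C b' c'.
         tm (cp g f) (cp g' f') = cp (tm g g') (tm f f')"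
    using mon[unfolded is_strict_monoidal_def] by (elim conjE) assumption
  from this[rule_format, of "dm f" "cd f" "cd g" "dm f'" "cd f'" "cd g'" f g f' g'] assms
  show ?thesis by auto
qed

lemma tm_cp_id_r[simp]: "f \<in> M \<Longrightarrow> g \<in> M \<Longrightarrow> dm g = cd f \<Longrightarrow> a \<in> Ob' \<Longrightarrow>
   tm (cp g f) (ii a) = cp (tm g (ii a)) (tm f (ii a))"
  using interchange[of f g "ii a" "ii a"] by simp
lemma tm_id_cp[simp]: "f \<in> M \<Longrightarrow> g \<in> M \<Longrightarrow> dm g = cd f \<Longrightarrow> a \<in> Ob' \<Longrightarrow>
   tm (ii a) (cp g f) = cp (tm (ii a) g) (tm (ii a) f)"
  using interchange[of "ii a" "ii a" f g] by simp
lemma tm_id_merge[simp]: "f \<in> M \<Longrightarrow> a \<in> Ob' \<Longrightarrow> c \<in> Ob' \<Longrightarrow>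
   tm (ii a) (tm (ii c) f) = tm (ii (to a c)) f"
  using tm_assoc[of "ii a" "ii c" f] by simp

lemma slide: "f \<in> M \<Longrightarrow> g \<in> M \<Longrightarrow> a = cd f \<Longrightarrow> c = dm g \<Longrightarrow>
   cp (tm (ii a) g) (tm f (ii c)) = cp (tm f (ii (cd g))) (tm (ii (dm f)) g)"
  using interchange[of f "ii (cd f)" "ii (dm g)" g] interchange[of "ii (dm f)" f g "ii (cd g)"] by simp

end

context psi begin

lemma K_iff: "s \<in> K \<longleftrightarrow> s \<in> M \<and> dm s = U \<and> cd s = U" by simp

lemma tm_sc_sc: "s \<in> K \<Longrightarrow> t \<in> K \<Longrightarrow> tm s t = cp s t"
  using interchange[of "ii U" s t "ii U"] by simp

lemma sc_cp_l: assumes "s \<in> K" "f \<in> M" "g \<in> M" "dm g = cd f"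
  shows "cp (tm s g) f = tm s (cp g f)"
  using interchange[of "ii U" s f g] assms by simp
lemma sc_cp_r: assumes "s \<in> K" "f \<in> M" "g \<in> M" "dm g = cd f"
  shows "cp g (tm s f) = tm s (cp g f)"
  using interchange[of s "ii U" f g] assms by simp
lemma sc_tm_r: assumes "s \<in> K" "f \<in> M" "g \<in> M"
  shows "tm f (tm s g) = tm s (tm f g)"
proof -
  have "\<forall>k\<in>K. \<forall>f\<in>M. \<forall>g\<in>M. tm (tm k f) g = tm k (tm f g) \<and> tm f (tm k g) = tm k (tm f g)"
    using kb unfolding k_bilinear_tensor_def by assumption
  from this[rule_format, of s f g] assms show ?thesis by blast
qed
lemma sc_mul: assumes "s \<in> K" "t \<in> K" "f \<in> M"
  shows "tm s (tm t f) = tm (cp s t) f"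
  using assms tm_sc_sc[of s t] tm_assoc[of s t f] by simp
lemma K_comm: "s \<in> K \<Longrightarrow> t \<in> K \<Longrightarrow> cp s t = cp t s"
  using gf unfolding ground_field_def by auto

lemma simple: "i \<in> I \<Longrightarrow> f \<in> Hom C (V i) (V i) \<Longrightarrow> \<exists>!k. k \<in> K \<and> f = tm k (ii (V i))"
  using psi unfolding psi_system_def simple_obj_def by blast

lemma scal_prop: assumes "i \<in> I" "f \<in> M" "dm f = V i" "cd f = V i"
  shows "scal C (V i) f \<in> K \<and> f = tm (scal C (V i) f) (ii (V i))"
proof -
  have "\<exists>!k. k \<in> K \<and> f = tm k (ii (V i))" using simple[of i f] assms by simp
  then show ?thesis unfolding scal_def by (rule theI')
qed
lemma scal_K[simp]: "i \<in> I \<Longrightarrow> f \<in> M \<Longrightarrow> dm f = V i \<Longrightarrow> cd f = V i \<Longrightarrow> scal C (V i) f \<in> M"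
  and scal_dom[simp]: "i \<in> I \<Longrightarrow> f \<in> M \<Longrightarrow> dm f = V i \<Longrightarrow> cd f = V i \<Longrightarrow> dm (scal C (V i) f) = U"
  and scal_cod[simp]: "i \<in> I \<Longrightarrow> f \<in> M \<Longrightarrow> dm f = V i \<Longrightarrow> cd f = V i \<Longrightarrow> cd (scal C (V i) f) = U"
  using scal_prop by auto

lemma scal_eq: assumes "i \<in> I" "k \<in> K" "f = tm k (ii (V i))"
  shows "scal C (V i) f = k"
proof -
  have f: "f \<in> M" "dm f = V i" "cd f = V i" using assms by auto
  have "\<exists>!k. k \<in> K \<and> f = tm k (ii (V i))" using simple[of i f] assms f by simp
  then show ?thesis unfolding scal_def using assms by (intro the1_equality) auto
qed

lemma scal_zero[simp]: "i \<in> I \<Longrightarrow> scal C (V i) (zr (V i) (V i)) = zr U U"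
  by (rule scal_eq) auto

lemma scal_add: assumes "i \<in> I" "f \<in> M" "dm f = V i" "cd f = V i" "g \<in> M" "dm g = V i" "cd g = V i"
  shows "scal C (V i) (ad f g) = ad (scal C (V i) f) (scal C (V i) g)"
proof -
  note sf = scal_prop[OF assms(1-4)] and sg = scal_prop[OF assms(1) assms(5-7)]
  have "ad f g = ad (tm (scal C (V i) f) (ii (V i))) (tm (scal C (V i) g) (ii (V i)))"
    using sf sg by simp
  also have "\<dots> = tm (ad (scal C (V i) f) (scal C (V i) g)) (ii (V i))"
    using sf sg assms by (intro tm_ad_l[symmetric]) auto
  finally show ?thesis using sf sg assms by (intro scal_eq) auto
qed

lemma scal_sc: assumes "i \<in> I" "s \<in> K" "f \<in> M" "dm f = V i" "cd f = V i"
  shows "scal C (V i) (tm s f) = cp s (scal C (V i) f)"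
proof -
  note sf = scal_prop[OF assms(1) assms(3-5)]
  have "tm s f = tm s (tm (scal C (V i) f) (ii (V i)))" using sf by simp
  also have "\<dots> = tm (cp s (scal C (V i) f)) (ii (V i))" using sf assms by (intro sc_mul) auto
  finally show ?thesis using sf assms by (intro scal_eq) auto
qed

lemma scal_id[simp]: "i \<in> I \<Longrightarrow> scal C (V i) (ii (V i)) = ii U"
  by (rule scal_eq) auto

lemma homzero: assumes "i \<in> I" "j \<in> I" "i \<noteq> j" "f \<in> M" "dm f = V i" "cd f = V j"
  shows "f = zr (V i) (V j)"
proof -
  have "\<forall>i\<in>I. \<forall>j\<in>I. i \<noteq> j \<longrightarrow> Hom C (V i) (V j) = {zr (V i) (V j)}"
    using psi[unfolded psi_system_def] by (elim conjE) assumption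
  then have "Hom C (V i) (V j) = {zr (V i) (V j)}" using assms(1-3) by blast
  moreover have "f \<in> Hom C (V i) (V j)" using assms by simp
  ultimately show ?thesis by blast
qed

lemma b_M[simp]: "i \<in> I \<Longrightarrow> b i \<in> M" and b_dom[simp]: "i \<in> I \<Longrightarrow> dm (b i) = U"
  and b_cod[simp]: "i \<in> I \<Longrightarrow> cd (b i) = to (V i) (V (st i))"
  and d_M[simp]: "i \<in> I \<Longrightarrow> d i \<in> M" and d_dom[simp]: "i \<in> I \<Longrightarrow> dm (d i) = to (V i) (V (st i))"
  and d_cod[simp]: "i \<in> I \<Longrightarrow> cd (d i) = U"
proof -
  have "\<forall>i\<in>I. b i \<in> Hom C (unit C) (tno C (V i) (V (st i))) \<and>
             d i \<in> Hom C (tno C (V i) (V (st i))) (unit C)"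
    using psi[unfolded psi_system_def] by (elim conjE) assumption
  then show "i \<in> I \<Longrightarrow> b i \<in> M" "i \<in> I \<Longrightarrow> dm (b i) = U" "i \<in> I \<Longrightarrow> cd (b i) = to (V i) (V (st i))"
   "i \<in> I \<Longrightarrow> d i \<in> M" "i \<in> I \<Longrightarrow> dm (d i) = to (V i) (V (st i))" "i \<in> I \<Longrightarrow> cd (d i) = U"
    by (auto simp del: Hom_iff simp: Hom_def)
qed

lemma zig1: "i \<in> I \<Longrightarrow> cp (tm (ii (V i)) (d (st i))) (tm (b i) (ii (V i))) = ii (V i)"
  and zig2: "i \<in> I \<Longrightarrow> cp (tm (d i) (ii (V i))) (tm (ii (V i)) (b (st i))) = ii (V i)"
proof -
  have "\<forall>i\<in>I. cp (tm (ii (V i)) (d (st i))) (tm (b i) (ii (V i))) = ii (V i) \<and>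
             cp (tm (d i) (ii (V i))) (tm (ii (V i)) (b (st i))) = ii (V i)"
    using psi[unfolded psi_system_def] by (elim conjE) assumption
  then show "i \<in> I \<Longrightarrow> cp (tm (ii (V i)) (d (st i))) (tm (b i) (ii (V i))) = ii (V i)"
    "i \<in> I \<Longrightarrow> cp (tm (d i) (ii (V i))) (tm (ii (V i)) (b (st i))) = ii (V i)" by blast+
qed

lemma hat_M[simp]: "x \<in> Hspace C I V \<Longrightarrow> i \<in> I \<Longrightarrow> j \<in> I \<Longrightarrow> k \<in> I \<Longrightarrow> pihat x i j k \<in> M"
  and hat_dom[simp]: "x \<in> Hspace C I V \<Longrightarrow> i \<in> I \<Longrightarrow> j \<in> I \<Longrightarrow> k \<in> I \<Longrightarrow> dm (pihat x i j k) = to (V i) (V j)"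
  and hat_cod[simp]: "x \<in> Hspace C I V \<Longrightarrow> i \<in> I \<Longrightarrow> j \<in> I \<Longrightarrow> k \<in> I \<Longrightarrow> cd (pihat x i j k) = V k"
  and chk_M[simp]: "x \<in> Hspace C I V \<Longrightarrow> i \<in> I \<Longrightarrow> j \<in> I \<Longrightarrow> k \<in> I \<Longrightarrow> picheck x i j k \<in> M"
  and chk_dom[simp]: "x \<in> Hspace C I V \<Longrightarrow> i \<in> I \<Longrightarrow> j \<in> I \<Longrightarrow> k \<in> I \<Longrightarrow> dm (picheck x i j k) = V k"
  and chk_cod[simp]: "x \<in> Hspace C I V \<Longrightarrow> i \<in> I \<Longrightarrow> j \<in> I \<Longrightarrow> k \<in> I \<Longrightarrow> cd (picheck x i j k) = to (V i) (V j)"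
proof -
  assume a: "x \<in> Hspace C I V" "i \<in> I" "j \<in> I" "k \<in> I"
  have "\<forall>i\<in>I. \<forall>j\<in>I. \<forall>k\<in>I. pihat x i j k \<in> Hom C (tno C (V i) (V j)) (V k) \<and>
                          picheck x i j k \<in> Hom C (V k) (tno C (V i) (V j))"
    using a(1) unfolding Hspace_def by blast
  from this[rule_format, OF a(2-4)]
  show "pihat x i j k \<in> M" "dm (pihat x i j k) = to (V i) (V j)" "cd (pihat x i j k) = V k"
    "picheck x i j k \<in> M" "dm (picheck x i j k) = V k" "cd (picheck x i j k) = to (V i) (V j)"
    by (simp_all only: Hom_iff)
qed

end

context psi begin
lemma slide_ctx: "f \<in> M \<Longrightarrow> g \<in> M \<Longrightarrow> r \<in> M \<Longrightarrow> a = cd f \<Longrightarrow> c = dm g \<Longrightarrow> cd r = to (dm f) c \<Longrightarrow>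
   cp (tm (ii a) g) (cp (tm f (ii c)) r) = cp (tm f (ii (cd g))) (cp (tm (ii (dm f)) g) r)"
  using slide[of f g a c] cp_assoc[of r "tm f (ii c)" "tm (ii a) g"]
     cp_assoc[of r "tm (ii (dm f)) g" "tm f (ii (cd g))"] by simp
lemma slide_ctx0: "f \<in> M \<Longrightarrow> g \<in> M \<Longrightarrow> a = cd f \<Longrightarrow> c = dm g \<Longrightarrow>
   cp (tm (ii a) g) (tm f (ii c)) = cp (tm f (ii (cd g))) (tm (ii (dm f)) g)"
  by (rule slide)

lemma slide2: "f \<in> M \<Longrightarrow> g \<in> M \<Longrightarrow> e \<in> Ob' \<Longrightarrow> a = cd f \<Longrightarrow> c = dm g \<Longrightarrow>
   cp (tm (ii (to a e)) g) (tm f (ii (to e c))) = cp (tm f (ii (to e (cd g)))) (tm (ii (to (dm f) e)) g)"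
  using slide[of f "tm (ii e) g" a "to e c"] by simp
lemma slide3: "f \<in> M \<Longrightarrow> g \<in> M \<Longrightarrow> a \<in> Ob' \<Longrightarrow> e = cd f \<Longrightarrow> c = dm g \<Longrightarrow>
   cp (tm (ii (to a e)) g) (tm (ii a) (tm f (ii c))) = cp (tm (ii a) (tm f (ii (cd g)))) (tm (ii (to a (dm f))) g)"
  using slide[of f g e c] tm_id_cp[of "tm f (ii c)" "tm (ii e) g" a] tm_id_cp[of "tm (ii (dm f)) g" "tm f (ii (cd g))" a]
  by simp
lemma ctx: "p \<in> M \<Longrightarrow> q \<in> M \<Longrightarrow> p' \<in> M \<Longrightarrow> q' \<in> M \<Longrightarrow> r \<in> M \<Longrightarrow> dm p = cd q \<Longrightarrow> dm q = cd r \<Longrightarrow>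
   dm p' = cd q' \<Longrightarrow> dm q' = cd r \<Longrightarrow> cp p q = cp p' q' \<Longrightarrow> cp p (cp q r) = cp p' (cp q' r)"
  by (metis cp_assoc)
lemma slide2_ctx: "f \<in> M \<Longrightarrow> g \<in> M \<Longrightarrow> e \<in> Ob' \<Longrightarrow> r \<in> M \<Longrightarrow> a = cd f \<Longrightarrow> c = dm g \<Longrightarrow> cd r = to (dm f) (to e c) \<Longrightarrow>
   cp (tm (ii (to a e)) g) (cp (tm f (ii (to e c))) r) = cp (tm f (ii (to e (cd g)))) (cp (tm (ii (to (dm f) e)) g) r)"
  by (rule ctx) (simp_all add: slide2)
lemma slide3_ctx: "f \<in> M \<Longrightarrow> g \<in> M \<Longrightarrow> a \<in> Ob' \<Longrightarrow> r \<in> M \<Longrightarrow> e = cd f \<Longrightarrow> c = dm g \<Longrightarrow> cd r = to a (to (dm f) c) \<Longrightarrow>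
   cp (tm (ii (to a e)) g) (cp (tm (ii a) (tm f (ii c))) r) = cp (tm (ii a) (tm f (ii (cd g)))) (cp (tm (ii (to a (dm f))) g) r)"
  by (rule ctx) (simp_all add: slide3)
lemmas slides = slide_ctx slide_ctx0 slide2 slide3 slide2_ctx slide3_ctx

lemma Z1gen: assumes "i \<in> I" "a \<in> Ob'" "c \<in> Ob'"
  shows "cp (tm (ii (to a (V i))) (tm (d (st i)) (ii c))) (tm (ii a) (tm (b i) (ii (to (V i) c)))) = ii (to a (to (V i) c))"
proof -
  have "tm (ii a) (tm (cp (tm (ii (V i)) (d (st i))) (tm (b i) (ii (V i)))) (ii c)) = tm (ii a) (tm (ii (V i)) (ii c))"
    using assms by (simp only: zig1)
  then show ?thesis using assms by simp
qed
lemma Z1sgen: assumes "j \<in> I" "a \<in> Ob'" "c \<in> Ob'"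
  shows "cp (tm (ii (to a (V (st j)))) (tm (d j) (ii c))) (tm (ii a) (tm (b (st j)) (ii (to (V (st j)) c)))) = ii (to a (to (V (st j)) c))"
  using Z1gen[of "st j" a c] assms by simp
lemma Z2gen: assumes "i \<in> I" "a \<in> Ob'" "c \<in> Ob'"
  shows "cp (tm (ii a) (tm (d i) (ii (to (V i) c)))) (tm (ii (to a (V i))) (tm (b (st i)) (ii c))) = ii (to a (to (V i) c))"
proof -
  have "tm (ii a) (tm (cp (tm (d i) (ii (V i))) (tm (ii (V i)) (b (st i)))) (ii c)) = tm (ii a) (tm (ii (V i)) (ii c))"
    using assms by (simp only: zig2)
  then show ?thesis using assms by simp
qed
lemma Z2sgen: assumes "l \<in> I" "a \<in> Ob'" "c \<in> Ob'"
  shows "cp (tm (ii a) (tm (d (st l)) (ii (to (V (st l)) c)))) (tm (ii (to a (V (st l)))) (tm (b l) (ii c))) = ii (to a (to (V (st l)) c))"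
  using Z2gen[of "st l" a c] assms by simp
lemma Z1_ac: assumes "i \<in> I" "a \<in> Ob'" "c \<in> Ob'" "A0 = (to a (V i))" "B0 = (to (V i) c)" shows "cp (tm (ii A0) (tm (d (st i)) (ii c))) (tm (ii a) (tm (b i) (ii B0))) = (ii (to a (to (V i) c)))"
  using Z1gen[of i a c] assms by simp
lemma Z1_ac_ctx: assumes "i \<in> I" "a \<in> Ob'" "c \<in> Ob'" "A0 = (to a (V i))" "B0 = (to (V i) c)" "r \<in> M" "cd r = (to a (to (V i) c))"
  shows "cp (tm (ii A0) (tm (d (st i)) (ii c))) (cp (tm (ii a) (tm (b i) (ii B0))) r) = r"
proof -
  have "cp (tm (ii A0) (tm (d (st i)) (ii c))) (cp (tm (ii a) (tm (b i) (ii B0))) r) = cp (cp (tm (ii A0) (tm (d (st i)) (ii c))) (tm (ii a) (tm (b i) (ii B0)))) r" using assms by (subst cp_assoc) simp_all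
  also have "\<dots> = r" using assms by (simp only: Z1_ac) simp
  finally show ?thesis .
qed
lemma Z1_aU: assumes "i \<in> I" "a \<in> Ob'" "A0 = (to a (V i))" shows "cp (tm (ii A0) (d (st i))) (tm (ii a) (tm (b i) (ii (V i)))) = (ii (to a (V i)))"
  using Z1gen[of i a U] assms by simp
lemma Z1_aU_ctx: assumes "i \<in> I" "a \<in> Ob'" "A0 = (to a (V i))" "r \<in> M" "cd r = (to a (V i))"
  shows "cp (tm (ii A0) (d (st i))) (cp (tm (ii a) (tm (b i) (ii (V i)))) r) = r"
proof -
  have "cp (tm (ii A0) (d (st i))) (cp (tm (ii a) (tm (b i) (ii (V i)))) r) = cp (cp (tm (ii A0) (d (st i))) (tm (ii a) (tm (b i) (ii (V i))))) r" using assms by (subst cp_assoc) simp_all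
  also have "\<dots> = r" using assms by (simp only: Z1_aU) simp
  finally show ?thesis .
qed
lemma Z1_Uc: assumes "i \<in> I" "c \<in> Ob'" "B0 = (to (V i) c)" shows "cp (tm (ii (V i)) (tm (d (st i)) (ii c))) (tm (b i) (ii B0)) = (ii (to (V i) c))"
  using Z1gen[of i U c] assms by simp
lemma Z1_Uc_ctx: assumes "i \<in> I" "c \<in> Ob'" "B0 = (to (V i) c)" "r \<in> M" "cd r = (to (V i) c)"
  shows "cp (tm (ii (V i)) (tm (d (st i)) (ii c))) (cp (tm (b i) (ii B0)) r) = r"
proof -
  have "cp (tm (ii (V i)) (tm (d (st i)) (ii c))) (cp (tm (b i) (ii B0)) r) = cp (cp (tm (ii (V i)) (tm (d (st i)) (ii c))) (tm (b i) (ii B0))) r" using assms by (subst cp_assoc) simp_all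
  also have "\<dots> = r" using assms by (simp only: Z1_Uc) simp
  finally show ?thesis .
qed
lemma Z1_UU: assumes "i \<in> I" shows "cp (tm (ii (V i)) (d (st i))) (tm (b i) (ii (V i))) = (ii (V i))"
  using Z1gen[of i U U] assms by simp
lemma Z1_UU_ctx: assumes "i \<in> I" "r \<in> M" "cd r = (V i)"
  shows "cp (tm (ii (V i)) (d (st i))) (cp (tm (b i) (ii (V i))) r) = r"
proof -
  have "cp (tm (ii (V i)) (d (st i))) (cp (tm (b i) (ii (V i))) r) = cp (cp (tm (ii (V i)) (d (st i))) (tm (b i) (ii (V i)))) r" using assms by (subst cp_assoc) simp_all
  also have "\<dots> = r" using assms by (simp only: Z1_UU) simp
  finally show ?thesis .
qed
lemma Z1s_ac: assumes "j \<in> I" "a \<in> Ob'" "c \<in> Ob'" "A0 = (to a (V (st j)))" "B0 = (to (V (st j)) c)" shows "cp (tm (ii A0) (tm (d j) (ii c))) (tm (ii a) (tm (b (st j)) (ii B0))) = (ii (to a (to (V (st j)) c)))"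
  using Z1sgen[of j a c] assms by simp
lemma Z1s_ac_ctx: assumes "j \<in> I" "a \<in> Ob'" "c \<in> Ob'" "A0 = (to a (V (st j)))" "B0 = (to (V (st j)) c)" "r \<in> M" "cd r = (to a (to (V (st j)) c))"
  shows "cp (tm (ii A0) (tm (d j) (ii c))) (cp (tm (ii a) (tm (b (st j)) (ii B0))) r) = r"
proof -
  have "cp (tm (ii A0) (tm (d j) (ii c))) (cp (tm (ii a) (tm (b (st j)) (ii B0))) r) = cp (cp (tm (ii A0) (tm (d j) (ii c))) (tm (ii a) (tm (b (st j)) (ii B0)))) r" using assms by (subst cp_assoc) simp_all
  also have "\<dots> = r" using assms by (simp only: Z1s_ac) simp
  finally show ?thesis .
qed
lemma Z1s_aU: assumes "j \<in> I" "a \<in> Ob'" "A0 = (to a (V (st j)))" shows "cp (tm (ii A0) (d j)) (tm (ii a) (tm (b (st j)) (ii (V (st j))))) = (ii (to a (V (st j))))"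
  using Z1sgen[of j a U] assms by simp
lemma Z1s_aU_ctx: assumes "j \<in> I" "a \<in> Ob'" "A0 = (to a (V (st j)))" "r \<in> M" "cd r = (to a (V (st j)))"
  shows "cp (tm (ii A0) (d j)) (cp (tm (ii a) (tm (b (st j)) (ii (V (st j))))) r) = r"
proof -
  have "cp (tm (ii A0) (d j)) (cp (tm (ii a) (tm (b (st j)) (ii (V (st j))))) r) = cp (cp (tm (ii A0) (d j)) (tm (ii a) (tm (b (st j)) (ii (V (st j)))))) r" using assms by (subst cp_assoc) simp_all
  also have "\<dots> = r" using assms by (simp only: Z1s_aU) simp
  finally show ?thesis .
qed
lemma Z1s_Uc: assumes "j \<in> I" "c \<in> Ob'" "B0 = (to (V (st j)) c)" shows "cp (tm (ii (V (st j))) (tm (d j) (ii c))) (tm (b (st j)) (ii B0)) = (ii (to (V (st j)) c))"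
  using Z1sgen[of j U c] assms by simp
lemma Z1s_Uc_ctx: assumes "j \<in> I" "c \<in> Ob'" "B0 = (to (V (st j)) c)" "r \<in> M" "cd r = (to (V (st j)) c)"
  shows "cp (tm (ii (V (st j))) (tm (d j) (ii c))) (cp (tm (b (st j)) (ii B0)) r) = r"
proof -
  have "cp (tm (ii (V (st j))) (tm (d j) (ii c))) (cp (tm (b (st j)) (ii B0)) r) = cp (cp (tm (ii (V (st j))) (tm (d j) (ii c))) (tm (b (st j)) (ii B0))) r" using assms by (subst cp_assoc) simp_all
  also have "\<dots> = r" using assms by (simp only: Z1s_Uc) simp
  finally show ?thesis .
qed
lemma Z1s_UU: assumes "j \<in> I" shows "cp (tm (ii (V (st j))) (d j)) (tm (b (st j)) (ii (V (st j)))) = (ii (V (st j)))"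
  using Z1sgen[of j U U] assms by simp
lemma Z1s_UU_ctx: assumes "j \<in> I" "r \<in> M" "cd r = (V (st j))"
  shows "cp (tm (ii (V (st j))) (d j)) (cp (tm (b (st j)) (ii (V (st j)))) r) = r"
proof -
  have "cp (tm (ii (V (st j))) (d j)) (cp (tm (b (st j)) (ii (V (st j)))) r) = cp (cp (tm (ii (V (st j))) (d j)) (tm (b (st j)) (ii (V (st j))))) r" using assms by (subst cp_assoc) simp_all
  also have "\<dots> = r" using assms by (simp only: Z1s_UU) simp
  finally show ?thesis .
qed
lemma Z2_ac: assumes "i \<in> I" "a \<in> Ob'" "c \<in> Ob'" "A0 = (to (V i) c)" "B0 = (to a (V i))" shows "cp (tm (ii a) (tm (d i) (ii A0))) (tm (ii B0) (tm (b (st i)) (ii c))) = (ii (to a (to (V i) c)))"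
  using Z2gen[of i a c] assms by simp
lemma Z2_ac_ctx: assumes "i \<in> I" "a \<in> Ob'" "c \<in> Ob'" "A0 = (to (V i) c)" "B0 = (to a (V i))" "r \<in> M" "cd r = (to a (to (V i) c))"
  shows "cp (tm (ii a) (tm (d i) (ii A0))) (cp (tm (ii B0) (tm (b (st i)) (ii c))) r) = r"
proof -
  have "cp (tm (ii a) (tm (d i) (ii A0))) (cp (tm (ii B0) (tm (b (st i)) (ii c))) r) = cp (cp (tm (ii a) (tm (d i) (ii A0))) (tm (ii B0) (tm (b (st i)) (ii c)))) r" using assms by (subst cp_assoc) simp_all
  also have "\<dots> = r" using assms by (simp only: Z2_ac) simp
  finally show ?thesis .
qed
lemma Z2_aU: assumes "i \<in> I" "a \<in> Ob'" "B0 = (to a (V i))" shows "cp (tm (ii a) (tm (d i) (ii (V i)))) (tm (ii B0) (b (st i))) = (ii (to a (V i)))"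
  using Z2gen[of i a U] assms by simp
lemma Z2_aU_ctx: assumes "i \<in> I" "a \<in> Ob'" "B0 = (to a (V i))" "r \<in> M" "cd r = (to a (V i))"
  shows "cp (tm (ii a) (tm (d i) (ii (V i)))) (cp (tm (ii B0) (b (st i))) r) = r"
proof -
  have "cp (tm (ii a) (tm (d i) (ii (V i)))) (cp (tm (ii B0) (b (st i))) r) = cp (cp (tm (ii a) (tm (d i) (ii (V i)))) (tm (ii B0) (b (st i)))) r" using assms by (subst cp_assoc) simp_all
  also have "\<dots> = r" using assms by (simp only: Z2_aU) simp
  finally show ?thesis .
qed
lemma Z2_Uc: assumes "i \<in> I" "c \<in> Ob'" "A0 = (to (V i) c)" shows "cp (tm (d i) (ii A0)) (tm (ii (V i)) (tm (b (st i)) (ii c))) = (ii (to (V i) c))"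
  using Z2gen[of i U c] assms by simp
lemma Z2_Uc_ctx: assumes "i \<in> I" "c \<in> Ob'" "A0 = (to (V i) c)" "r \<in> M" "cd r = (to (V i) c)"
  shows "cp (tm (d i) (ii A0)) (cp (tm (ii (V i)) (tm (b (st i)) (ii c))) r) = r"
proof -
  have "cp (tm (d i) (ii A0)) (cp (tm (ii (V i)) (tm (b (st i)) (ii c))) r) = cp (cp (tm (d i) (ii A0)) (tm (ii (V i)) (tm (b (st i)) (ii c)))) r" using assms by (subst cp_assoc) simp_all
  also have "\<dots> = r" using assms by (simp only: Z2_Uc) simp
  finally show ?thesis .
qed
lemma Z2_UU: assumes "i \<in> I" shows "cp (tm (d i) (ii (V i))) (tm (ii (V i)) (b (st i))) = (ii (V i))"
  using Z2gen[of i U U] assms by simp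
lemma Z2_UU_ctx: assumes "i \<in> I" "r \<in> M" "cd r = (V i)"
  shows "cp (tm (d i) (ii (V i))) (cp (tm (ii (V i)) (b (st i))) r) = r"
proof -
  have "cp (tm (d i) (ii (V i))) (cp (tm (ii (V i)) (b (st i))) r) = cp (cp (tm (d i) (ii (V i))) (tm (ii (V i)) (b (st i)))) r" using assms by (subst cp_assoc) simp_all
  also have "\<dots> = r" using assms by (simp only: Z2_UU) simp
  finally show ?thesis .
qed
lemma Z2s_ac: assumes "l \<in> I" "a \<in> Ob'" "c \<in> Ob'" "A0 = (to (V (st l)) c)" "B0 = (to a (V (st l)))" shows "cp (tm (ii a) (tm (d (st l)) (ii A0))) (tm (ii B0) (tm (b l) (ii c))) = (ii (to a (to (V (st l)) c)))"
  using Z2sgen[of l a c] assms by simp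
lemma Z2s_ac_ctx: assumes "l \<in> I" "a \<in> Ob'" "c \<in> Ob'" "A0 = (to (V (st l)) c)" "B0 = (to a (V (st l)))" "r \<in> M" "cd r = (to a (to (V (st l)) c))"
  shows "cp (tm (ii a) (tm (d (st l)) (ii A0))) (cp (tm (ii B0) (tm (b l) (ii c))) r) = r"
proof -
  have "cp (tm (ii a) (tm (d (st l)) (ii A0))) (cp (tm (ii B0) (tm (b l) (ii c))) r) = cp (cp (tm (ii a) (tm (d (st l)) (ii A0))) (tm (ii B0) (tm (b l) (ii c)))) r" using assms by (subst cp_assoc) simp_all
  also have "\<dots> = r" using assms by (simp only: Z2s_ac) simp
  finally show ?thesis .
qed
lemma Z2s_aU: assumes "l \<in> I" "a \<in> Ob'" "B0 = (to a (V (st l)))" shows "cp (tm (ii a) (tm (d (st l)) (ii (V (st l))))) (tm (ii B0) (b l)) = (ii (to a (V (st l))))"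
  using Z2sgen[of l a U] assms by simp
lemma Z2s_aU_ctx: assumes "l \<in> I" "a \<in> Ob'" "B0 = (to a (V (st l)))" "r \<in> M" "cd r = (to a (V (st l)))"
  shows "cp (tm (ii a) (tm (d (st l)) (ii (V (st l))))) (cp (tm (ii B0) (b l)) r) = r"
proof -
  have "cp (tm (ii a) (tm (d (st l)) (ii (V (st l))))) (cp (tm (ii B0) (b l)) r) = cp (cp (tm (ii a) (tm (d (st l)) (ii (V (st l))))) (tm (ii B0) (b l))) r" using assms by (subst cp_assoc) simp_all
  also have "\<dots> = r" using assms by (simp only: Z2s_aU) simp
  finally show ?thesis .
qed
lemma Z2s_Uc: assumes "l \<in> I" "c \<in> Ob'" "A0 = (to (V (st l)) c)" shows "cp (tm (d (st l)) (ii A0)) (tm (ii (V (st l))) (tm (b l) (ii c))) = (ii (to (V (st l)) c))"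
  using Z2sgen[of l U c] assms by simp
lemma Z2s_Uc_ctx: assumes "l \<in> I" "c \<in> Ob'" "A0 = (to (V (st l)) c)" "r \<in> M" "cd r = (to (V (st l)) c)"
  shows "cp (tm (d (st l)) (ii A0)) (cp (tm (ii (V (st l))) (tm (b l) (ii c))) r) = r"
proof -
  have "cp (tm (d (st l)) (ii A0)) (cp (tm (ii (V (st l))) (tm (b l) (ii c))) r) = cp (cp (tm (d (st l)) (ii A0)) (tm (ii (V (st l))) (tm (b l) (ii c)))) r" using assms by (subst cp_assoc) simp_all
  also have "\<dots> = r" using assms by (simp only: Z2s_Uc) simp
  finally show ?thesis .
qed
lemma Z2s_UU: assumes "l \<in> I" shows "cp (tm (d (st l)) (ii (V (st l)))) (tm (ii (V (st l))) (b l)) = (ii (V (st l)))"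
  using Z2sgen[of l U U] assms by simp
lemma Z2s_UU_ctx: assumes "l \<in> I" "r \<in> M" "cd r = (V (st l))"
  shows "cp (tm (d (st l)) (ii (V (st l)))) (cp (tm (ii (V (st l))) (b l)) r) = r"
proof -
  have "cp (tm (d (st l)) (ii (V (st l)))) (cp (tm (ii (V (st l))) (b l)) r) = cp (cp (tm (d (st l)) (ii (V (st l)))) (tm (ii (V (st l))) (b l))) r" using assms by (subst cp_assoc) simp_all
  also have "\<dots> = r" using assms by (simp only: Z2s_UU) simp
  finally show ?thesis .
qed
lemmas zigs = Z1_ac Z1_ac_ctx Z1_aU Z1_aU_ctx Z1_Uc Z1_Uc_ctx Z1_UU Z1_UU_ctx Z1s_ac Z1s_ac_ctx Z1s_aU Z1s_aU_ctx Z1s_Uc Z1s_Uc_ctx Z1s_UU Z1s_UU_ctx Z2_ac Z2_ac_ctx Z2_aU Z2_aU_ctx Z2_Uc Z2_Uc_ctx Z2_UU Z2_UU_ctx Z2s_ac Z2s_ac_ctx Z2s_aU Z2s_aU_ctx Z2s_Uc Z2s_Uc_ctx Z2s_UU Z2s_UU_ctx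

lemma S4a: "F \<in> M \<Longrightarrow> g \<in> M \<Longrightarrow> dm g = U \<Longrightarrow> Q = dm F \<Longrightarrow> c = cd g \<Longrightarrow>
  cp (tm F (ii c)) (tm (ii Q) g) = cp (tm (ii (cd F)) g) F"
  using slide[of F g "cd F" "dm g"] by simp
lemma S4b: "F \<in> M \<Longrightarrow> g \<in> M \<Longrightarrow> p \<in> Ob' \<Longrightarrow> dm g = U \<Longrightarrow> Q = to p (dm F) \<Longrightarrow> c = cd g \<Longrightarrow>
  cp (tm (ii p) (tm F (ii c))) (tm (ii Q) g) = cp (tm (ii (to p (cd F))) g) (tm (ii p) F)"
proof -
  assume a: "F \<in> M" "g \<in> M" "p \<in> Ob'" "dm g = U" "Q = to p (dm F)" "c = cd g"
  have "tm (ii p) (cp (tm F (ii c)) (tm (ii (dm F)) g)) = tm (ii p) (cp (tm (ii (cd F)) g) F)"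
    using a by (simp only: S4a)
  then show ?thesis using a by simp
qed
lemma S5a: "f \<in> M \<Longrightarrow> g \<in> M \<Longrightarrow> cd f = U \<Longrightarrow> a = dm f \<Longrightarrow> c = cd g \<Longrightarrow>
  cp (tm f (ii c)) (tm (ii a) g) = cp g (tm f (ii (dm g)))"
  using slide[of f g "cd f" "dm g"] by simp
lemma S5b: "f \<in> M \<Longrightarrow> g \<in> M \<Longrightarrow> p \<in> Ob' \<Longrightarrow> cd f = U \<Longrightarrow> Q = to p (dm f) \<Longrightarrow> c = cd g \<Longrightarrow>
  cp (tm (ii p) (tm f (ii c))) (tm (ii Q) g) = cp (tm (ii p) g) (tm (ii p) (tm f (ii (dm g))))"
proof -
  assume a: "f \<in> M" "g \<in> M" "p \<in> Ob'" "cd f = U" "Q = to p (dm f)" "c = cd g"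
  have "tm (ii p) (cp (tm f (ii c)) (tm (ii (dm f)) g)) = tm (ii p) (cp g (tm f (ii (dm g))))"
    using a by (simp only: S5a)
  then show ?thesis using a by simp
qed
lemma S4a_ctx: "F \<in> M \<Longrightarrow> g \<in> M \<Longrightarrow> r \<in> M \<Longrightarrow> dm g = U \<Longrightarrow> Q = dm F \<Longrightarrow> c = cd g \<Longrightarrow> cd r = Q \<Longrightarrow>
  cp (tm F (ii c)) (cp (tm (ii Q) g) r) = cp (tm (ii (cd F)) g) (cp F r)"
  by (rule ctx) (simp_all add: S4a)
lemma S4b_ctx: "F \<in> M \<Longrightarrow> g \<in> M \<Longrightarrow> r \<in> M \<Longrightarrow> p \<in> Ob' \<Longrightarrow> dm g = U \<Longrightarrow> Q = to p (dm F) \<Longrightarrow> c = cd g \<Longrightarrow> cd r = Q \<Longrightarrow>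
  cp (tm (ii p) (tm F (ii c))) (cp (tm (ii Q) g) r) = cp (tm (ii (to p (cd F))) g) (cp (tm (ii p) F) r)"
  by (rule ctx) (simp_all add: S4b)
lemma S5a_ctx: "f \<in> M \<Longrightarrow> g \<in> M \<Longrightarrow> r \<in> M \<Longrightarrow> cd f = U \<Longrightarrow> a = dm f \<Longrightarrow> c = cd g \<Longrightarrow> cd r = to a (dm g) \<Longrightarrow>
  cp (tm f (ii c)) (cp (tm (ii a) g) r) = cp g (cp (tm f (ii (dm g))) r)"
  by (rule ctx) (simp_all add: S5a)
lemma S5b_ctx: "f \<in> M \<Longrightarrow> g \<in> M \<Longrightarrow> r \<in> M \<Longrightarrow> p \<in> Ob' \<Longrightarrow> cd f = U \<Longrightarrow> Q = to p (dm f) \<Longrightarrow> c = cd g \<Longrightarrow> cd r = to Q (dm g) \<Longrightarrow>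
  cp (tm (ii p) (tm f (ii c))) (cp (tm (ii Q) g) r) = cp (tm (ii p) g) (cp (tm (ii p) (tm f (ii (dm g)))) r)"
  by (rule ctx) (simp_all add: S5b)
lemmas slides45 = S4a S4b S5a S5b S4a_ctx S4b_ctx S5a_ctx S5b_ctx

lemma test_i: assumes H: "y \<in> Hspace C I V" "u \<in> Hspace C I V" "v \<in> Hspace C I V" "x \<in> Hspace C I V"
  and I: "i \<in> I" "j \<in> I" "k \<in> I" "l \<in> I" "m \<in> I" "n \<in> I"
 shows "cp (pihat y (st i) m n) (cp (tm (ii (V (st i))) (cp (pihat u k l m) (cp (tm (pihat v i j k) (ii (V l))) (tm (ii (V i)) (picheck x j l n))))) (tm (b (st i)) (ii (V n))))
 = cp (pihat y (st i) m n) (cp (tm (ii (V (st i))) (pihat u k l m)) (cp (tm (cp (tm (ii (V (st i))) (pihat v i j k)) (tm (b (st i)) (ii (V j)))) (ii (V l))) (picheck x j l n)))"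
  using H I apply (simp add: slides slides45 zigs)
  done
lemma test_ii: assumes H: "y \<in> Hspace C I V" "u \<in> Hspace C I V" "v \<in> Hspace C I V" "x \<in> Hspace C I V"
  and I: "i \<in> I" "j \<in> I" "k \<in> I" "l \<in> I" "m \<in> I" "n \<in> I"
 shows "cp (pihat u i n m) (cp (tm (ii (V i)) (cp (tm (d j) (ii (V n))) (tm (ii (V j)) (picheck v (st j) n l))))
     (cp (tm (cp (tm (pihat x k (st j) i) (ii (V j))) (tm (ii (V k)) (b (st j)))) (ii (V l))) (picheck y k l m)))
  = cp (pihat u i n m) (cp (tm (pihat x k (st j) i) (ii (V n))) (cp (tm (ii (V k)) (picheck v (st j) n l)) (picheck y k l m)))"
  using H I apply (simp add: slides slides45 zigs)
  done
lemma test_iii: assumes H: "y \<in> Hspace C I V" "u \<in> Hspace C I V" "v \<in> Hspace C I V" "x \<in> Hspace C I V"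
  and I: "i \<in> I" "j \<in> I" "k \<in> I" "l \<in> I" "m \<in> I" "n \<in> I"
 shows "cp (pihat u m (st l) k) (cp (tm (cp (pihat v i n m) (cp (tm (ii (V i)) (cp (tm (ii (V n)) (d (st l))) (tm (picheck x n (st l) j) (ii (V l))))) (tm (picheck y i j k) (ii (V l))))) (ii (V (st l)))) (tm (ii (V k)) (b (st (st l)))))
  = cp (pihat u m (st l) k) (cp (tm (pihat v i n m) (ii (V (st l)))) (cp (tm (ii (V i)) (picheck x n (st l) j)) (picheck y i j k)))"
  using H I apply (simp add: slides slides45 zigs)
  done
lemma test_4: assumes "i \<in> I" "j \<in> I" "k \<in> I" "f \<in> M" "dm f = to (V i) (V j)" "cd f = V k"
  shows "cp (tm (d i) (ii (V k))) (tm (ii (V i)) (cp (tm (ii (V (st i))) f) (tm (b (st i)) (ii (V j))))) = f"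
  using assms by (simp add: slides slides45 zigs)
end

context psi begin

lemma KS_reindex: assumes "bij_betw h S' S" "\<And>a. a \<in> S' \<Longrightarrow> f (h a) = g a"
  shows "ksum C f S = ksum C g S'"
proof -
  let ?z = "zr U U"
  have e: "{a\<in>S. f a \<noteq> ?z} = h ` {a\<in>S'. g a \<noteq> ?z}"
  proof
    show "{a \<in> S. f a \<noteq> ?z} \<subseteq> h ` {a \<in> S'. g a \<noteq> ?z}"
    proof
      fix x assume "x \<in> {a \<in> S. f a \<noteq> ?z}"
      then have x: "x \<in> S" "f x \<noteq> ?z" by auto
      then obtain a where "a \<in> S'" "x = h a" using assms(1) unfolding bij_betw_def by auto
      then show "x \<in> h ` {a \<in> S'. g a \<noteq> ?z}" using x assms(2) by auto
    qed
    show "h ` {a \<in> S'. g a \<noteq> ?z} \<subseteq> {a \<in> S. f a \<noteq> ?z}"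
      using assms unfolding bij_betw_def by auto
  qed
  have inj: "inj_on h {a\<in>S'. g a \<noteq> ?z}" using assms(1) unfolding bij_betw_def inj_on_def by auto
  show ?thesis unfolding ksum_def e fold_image[OF inj]
    by (rule fold_closed_eq[where B=UNIV]) (auto simp: assms(2))
qed

lemma KS_single: assumes "t \<in> S" "\<And>a. a \<in> S \<Longrightarrow> a \<noteq> t \<Longrightarrow> f a = zr U U"
  "f t \<in> M" "dm (f t) = U" "cd (f t) = U"
  shows "ksum C f S = f t"
proof (cases "f t = zr U U")
  case True
  then have e: "{a \<in> S. f a \<noteq> zr U U} = {}" using assms(2) by auto
  show ?thesis unfolding ksum_def e using True by simp
next
  case False
  then have e: "{a \<in> S. f a \<noteq> zr U U} = {t}" using assms(1,2) by auto
  interpret comp_fun_commute_on "{t}" "(\<lambda>a acc. ad (f a) acc)" by unfold_locales auto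
  have "Finite_Set.fold (\<lambda>a acc. ad (f a) acc) (zr U U) (insert t {}) = ad (f t) (zr U U)"
    by (subst fold_insert) auto
  then show ?thesis unfolding ksum_def e using assms(3-5) by simp
qed

lemma st_eq: "a \<in> I \<Longrightarrow> p \<in> I \<Longrightarrow> st a = p \<longleftrightarrow> a = st p"
  by (metis st_st)

definition sgh where "sgh p q r f = ((\<lambda>a c e. if a \<in> I \<and> c \<in> I \<and> e \<in> I then
    (if (a,c,e) = (p,q,r) then f else zr (to (V a) (V c)) (V e)) else undefined),
   (\<lambda>a c e. if a \<in> I \<and> c \<in> I \<and> e \<in> I then zr (V e) (to (V a) (V c)) else undefined))"
definition sgc where "sgc p q r g = (
   (\<lambda>a c e. if a \<in> I \<and> c \<in> I \<and> e \<in> I then zr (to (V a) (V c)) (V e) else undefined),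
   (\<lambda>a c e. if a \<in> I \<and> c \<in> I \<and> e \<in> I then
    (if (a,c,e) = (p,q,r) then g else zr (V e) (to (V a) (V c))) else undefined))"

lemma sgh_H: assumes "p \<in> I" "q \<in> I" "r \<in> I" "f \<in> M" "dm f = to (V p) (V q)" "cd f = V r"
  shows "sgh p q r f \<in> Hspace C I V"
proof -
  have "{(i, j, k). i \<in> I \<and> j \<in> I \<and> k \<in> I \<and> pihat (sgh p q r f) i j k \<noteq> zr (to (V i) (V j)) (V k)} \<subseteq> {(p,q,r)}"
    by (auto simp: sgh_def pihat_def)
  then have f1: "finite {(i, j, k). i \<in> I \<and> j \<in> I \<and> k \<in> I \<and> pihat (sgh p q r f) i j k \<noteq> zr (to (V i) (V j)) (V k)}"
    by (rule finite_subset) simp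
  have f2: "{(i, j, k). i \<in> I \<and> j \<in> I \<and> k \<in> I \<and> picheck (sgh p q r f) i j k \<noteq> zr (V k) (to (V i) (V j))} = {}"
    by (auto simp: sgh_def picheck_def)
  show ?thesis unfolding Hspace_def mem_Collect_eq
    apply (intro conjI)
    using assms apply (auto simp: sgh_def pihat_def picheck_def)[2]
    using f1 apply simp
    unfolding f2 by simp
qed

lemma sgc_H: assumes "p \<in> I" "q \<in> I" "r \<in> I" "g \<in> M" "cd g = to (V p) (V q)" "dm g = V r"
  shows "sgc p q r g \<in> Hspace C I V"
proof -
  have "{(i, j, k). i \<in> I \<and> j \<in> I \<and> k \<in> I \<and> picheck (sgc p q r g) i j k \<noteq> zr (V k) (to (V i) (V j))} \<subseteq> {(p,q,r)}"
    by (auto simp: sgc_def picheck_def)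
  then have f1: "finite {(i, j, k). i \<in> I \<and> j \<in> I \<and> k \<in> I \<and> picheck (sgc p q r g) i j k \<noteq> zr (V k) (to (V i) (V j))}"
    by (rule finite_subset) simp
  have f2: "{(i, j, k). i \<in> I \<and> j \<in> I \<and> k \<in> I \<and> pihat (sgc p q r g) i j k \<noteq> zr (to (V i) (V j)) (V k)} = {}"
    by (auto simp: sgc_def pihat_def)
  show ?thesis unfolding Hspace_def mem_Collect_eq
    apply (intro conjI)
    using assms apply (auto simp: sgc_def pihat_def picheck_def)[2]
    apply (simp only: f2, simp)
    using f1 by simp
qed

lemma hform_sgh: assumes z: "z \<in> Hspace C I V" and a: "p \<in> I" "q \<in> I" "r \<in> I" "f \<in> M" "dm f = to (V p) (V q)" "cd f = V r"
  shows "hform C I V (sgh p q r f) z = scal C (V r) (cp f (picheck z p q r))"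
  unfolding hform_def
proof (subst KS_single[where t="(p,q,r)"])
  show "(p, q, r) \<in> I \<times> I \<times> I" using a by simp
  show "\<And>x. x \<in> I \<times> I \<times> I \<Longrightarrow> x \<noteq> (p, q, r) \<Longrightarrow>
      (case x of (i, j, k) \<Rightarrow> ad (scal C (V k) (cp (pihat (sgh p q r f) i j k) (picheck z i j k)))
            (scal C (V k) (cp (pihat z i j k) (picheck (sgh p q r f) i j k)))) = zr U U"
    using z by (auto simp: sgh_def pihat_def[of "(_, _)"] picheck_def[of "(_, _)"] split: if_splits)
qed (use a z in \<open>auto simp: sgh_def pihat_def[of "(_, _)"] picheck_def[of "(_, _)"]\<close>)

lemma hform_sgc: assumes z: "z \<in> Hspace C I V" and a: "p \<in> I" "q \<in> I" "r \<in> I" "g \<in> M" "cd g = to (V p) (V q)" "dm g = V r"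
  shows "hform C I V (sgc p q r g) z = scal C (V r) (cp (pihat z p q r) g)"
  unfolding hform_def
proof (subst KS_single[where t="(p,q,r)"])
  show "(p, q, r) \<in> I \<times> I \<times> I" using a by simp
  show "\<And>x. x \<in> I \<times> I \<times> I \<Longrightarrow> x \<noteq> (p, q, r) \<Longrightarrow>
      (case x of (i, j, k) \<Rightarrow> ad (scal C (V k) (cp (pihat (sgc p q r g) i j k) (picheck z i j k)))
            (scal C (V k) (cp (pihat z i j k) (picheck (sgc p q r g) i j k)))) = zr U U"
    using z by (auto simp: sgc_def pihat_def[of "(_, _)"] picheck_def[of "(_, _)"] split: if_splits)
qed (use a z in \<open>auto simp: sgc_def pihat_def[of "(_, _)"] picheck_def[of "(_, _)"]\<close>)

lemma opA_sgh: assumes a: "p \<in> I" "q \<in> I" "r \<in> I" "E \<in> M" "dm E = to (V p) (V q)" "cd E = V r"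
  shows "opA C I V st b d (sgh p q r E) = sgc (st p) r q (cp (tm (ii (V (st p))) E) (tm (b (st p)) (ii (V q))))"
  unfolding opA_def sgc_def
  apply (simp add: sgh_def pihat_def[of "(_, _)"] picheck_def[of "(_, _)"] fun_eq_iff)
  using a apply (auto simp: st_eq)
  done

lemma opB_sgh: assumes a: "k \<in> I" "l \<in> I" "m \<in> I" "G \<in> M" "dm G = to (V k) (V l)" "cd G = V m"
  shows "opB C I V st b d (sgh k l m G) = sgc m (st l) k (cp (tm G (ii (V (st l)))) (tm (ii (V k)) (b l)))"
  unfolding opB_def sgc_def
  apply (simp add: sgh_def pihat_def[of "(_, _)"] picheck_def[of "(_, _)"] fun_eq_iff)
  using a apply (auto simp: st_eq)
  done

end

context psi begin

abbreviation "ty f a c \<equiv> f \<in> M \<and> dm f = a \<and> cd f = c"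

lemma msum_ty: "a \<in> Ob' \<Longrightarrow> c \<in> Ob' \<Longrightarrow> (\<forall>t\<in>set L. ty t a c) \<Longrightarrow> ty (msum_list C a c L) a c"
  by (induction L) auto

lemma msum_zero: "a \<in> Ob' \<Longrightarrow> c \<in> Ob' \<Longrightarrow> (\<forall>t\<in>set L. t = zr a c) \<Longrightarrow> msum_list C a c L = zr a c"
  by (induction L) auto

lemma cp_msum_l: assumes "f \<in> M" "cd f = a" "c \<in> Ob'" "\<forall>t\<in>set L. ty t a c"
  shows "cp (msum_list C a c L) f = msum_list C (dm f) c (map (\<lambda>t. cp t f) L)"
  using assms(4)
proof (induction L)
  case Nil then show ?case using assms(1-3) cp_zero_l[of f c a] by (simp del: cp_zero_l)
next
  case (Cons t L)
  have m: "ty (msum_list C a c L) a c" using Cons.prems assms by (intro msum_ty) auto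
  have "cp (msum_list C a c (t # L)) f = ad (cp t f) (cp (msum_list C a c L) f)"
    using Cons.prems assms m by (simp add: cp_ad_l)
  then show ?case using Cons by simp
qed

lemma cp_msum_r: assumes "g \<in> M" "dm g = c" "a \<in> Ob'" "\<forall>t\<in>set L. ty t a c"
  shows "cp g (msum_list C a c L) = msum_list C a (cd g) (map (cp g) L)"
  using assms(4)
proof (induction L)
  case Nil then show ?case using assms(1-3) cp_zero_r[of g a c] by (simp del: cp_zero_r)
next
  case (Cons t L)
  have m: "ty (msum_list C a c L) a c" using Cons.prems assms by (intro msum_ty) auto
  have "cp g (msum_list C a c (t # L)) = ad (cp g t) (cp g (msum_list C a c L))"
    using Cons.prems assms m by (simp add: cp_ad_r)
  then show ?case using Cons by simp
qed

lemma lin_msum: assumes "a \<in> Ob'" "c \<in> Ob'"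
  and L1: "\<And>f. ty f a c \<Longrightarrow> ty (\<phi> f) U U"
  and L2: "\<And>f g. ty f a c \<Longrightarrow> ty g a c \<Longrightarrow> \<phi> (ad f g) = ad (\<phi> f) (\<phi> g)"
  and "\<forall>t\<in>set L. ty t a c"
  shows "\<phi> (msum_list C a c L) = msum_list C U U (map \<phi> L)"
  using assms(5)
proof (induction L)
  case Nil
  have z: "ty (zr a c) a c" using assms by simp
  have zz: "ad (zr a c) (zr a c) = zr a c" using assms by simp
  have "ad (\<phi> (zr a c)) (\<phi> (zr a c)) = \<phi> (zr a c)" using L2[OF z z] unfolding zz by (rule sym)
  then have e1: "\<phi> (zr a c) = zr (dm (\<phi> (zr a c))) (cd (\<phi> (zr a c)))" using idem_zero L1[OF z] by blast
  have e2: "dm (\<phi> (zr a c)) = U" "cd (\<phi> (zr a c)) = U" using L1[OF z] by auto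
  have "\<phi> (zr a c) = zr U U" using e1 unfolding e2 .
  then show ?case by simp
next
  case (Cons t L)
  have m: "ty (msum_list C a c L) a c" using Cons.prems assms by (intro msum_ty) auto
  have "\<phi> (msum_list C a c (t # L)) = ad (\<phi> t) (\<phi> (msum_list C a c L))"
    using Cons.prems m L2[of t "msum_list C a c L"] by simp
  then show ?case using Cons by simp
qed

lemma lin_zero: assumes "a \<in> Ob'" "c \<in> Ob'"
  and L1: "\<And>f. ty f a c \<Longrightarrow> ty (\<phi> f) U U"
  and L2: "\<And>f g. ty f a c \<Longrightarrow> ty g a c \<Longrightarrow> \<phi> (ad f g) = ad (\<phi> f) (\<phi> g)"
  shows "\<phi> (zr a c) = zr U U"
proof -
  have z: "ty (zr a c) a c" using assms by simp
  have zz: "ad (zr a c) (zr a c) = zr a c" using assms by simp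
  have "ad (\<phi> (zr a c)) (\<phi> (zr a c)) = \<phi> (zr a c)" using L2[OF z z] unfolding zz by (rule sym)
  then have e1: "\<phi> (zr a c) = zr (dm (\<phi> (zr a c))) (cd (\<phi> (zr a c)))" using idem_zero L1[OF z] by blast
  have e2: "dm (\<phi> (zr a c)) = U" "cd (\<phi> (zr a c)) = U" using L1[OF z] by auto
  show "\<phi> (zr a c) = zr U U" using e1 unfolding e2 .
qed

lemma scal_msum: assumes "i \<in> I" "\<forall>t\<in>set L. ty t (V i) (V i)"
  shows "scal C (V i) (msum_list C (V i) (V i) L) = msum_list C U U (map (scal C (V i)) L)"
  by (rule lin_msum) (use assms in \<open>auto simp: scal_add\<close>)

definition P where "P i j \<longleftrightarrow> (\<exists>k\<in>I. Hom C (V k) (to (V i) (V j)) \<noteq> {zr (V k) (to (V i) (V j))})"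

lemma decomp: assumes "i \<in> I" "j \<in> I" "P i j"
  obtains ps where "\<forall>(k, x, y)\<in>set ps. k \<in> I \<and> ty x (V k) (to (V i) (V j)) \<and> ty y (to (V i) (V j)) (V k)"
    "ii (to (V i) (V j)) = msum_list C (to (V i) (V j)) (to (V i) (V j)) (map (\<lambda>(k, x, y). cp x y) ps)"
proof -
  have "\<forall>i\<in>I. \<forall>j\<in>I.
        (\<exists>k\<in>I. Hom C (V k) (tno C (V i) (V j)) \<noteq> {mzero C (V k) (tno C (V i) (V j))}) \<longrightarrow>
        (\<exists>ps :: ('i \<times> 'm \<times> 'm) list.
           (\<forall>(k, x, y)\<in>set ps. k \<in> I \<and> x \<in> Hom C (V k) (tno C (V i) (V j)) \<and>
                                y \<in> Hom C (tno C (V i) (V j)) (V k)) \<and>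
           idm C (tno C (V i) (V j)) =
             msum_list C (tno C (V i) (V j)) (tno C (V i) (V j))
               (map (\<lambda>(k, x, y). cmp C x y) ps))"
    using psi[unfolded psi_system_def] by (elim conjE) assumption
  from this[rule_format, OF assms(1,2)] assms(3) obtain ps where
    "(\<forall>(k, x, y)\<in>set ps. k \<in> I \<and> x \<in> Hom C (V k) (tno C (V i) (V j)) \<and>
                                y \<in> Hom C (tno C (V i) (V j)) (V k))"
    "idm C (tno C (V i) (V j)) = msum_list C (tno C (V i) (V j)) (tno C (V i) (V j))
               (map (\<lambda>(k, x, y). cmp C x y) ps)" unfolding P_def by blast
  then show ?thesis using that by auto
qed

lemma notP: assumes "i \<in> I" "j \<in> I" "k \<in> I" "\<not> P i j" "ty c (V k) (to (V i) (V j))"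
  shows "c = zr (V k) (to (V i) (V j))"
proof -
  have "Hom C (V k) (to (V i) (V j)) = {zr (V k) (to (V i) (V j))}" using assms unfolding P_def by blast
  moreover have "c \<in> Hom C (V k) (to (V i) (V j))" using assms by simp
  ultimately show ?thesis by blast
qed

lemma EXPc: assumes ijk: "i \<in> I" "j \<in> I" "k \<in> I"
  and ps: "\<forall>(k, x, y)\<in>set ps. k \<in> I \<and> ty x (V k) (to (V i) (V j)) \<and> ty y (to (V i) (V j)) (V k)"
    "ii (to (V i) (V j)) = msum_list C (to (V i) (V j)) (to (V i) (V j)) (map (\<lambda>(k, x, y). cp x y) ps)"
  and c: "ty c (V k) (to (V i) (V j))"
  shows "c = msum_list C (V k) (to (V i) (V j)) (map (\<lambda>(k', x, y). if k' = k then tm (scal C (V k) (cp y c)) x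
              else zr (V k) (to (V i) (V j))) ps)"
proof -
  have "c = cp (ii (to (V i) (V j))) c" using c ijk by simp
  also have "\<dots> = cp (msum_list C (to (V i) (V j)) (to (V i) (V j)) (map (\<lambda>(k, x, y). cp x y) ps)) c"
    using ps(2) by simp
  also have "\<dots> = msum_list C (V k) (to (V i) (V j)) (map (\<lambda>t. cp t c) (map (\<lambda>(k, x, y). cp x y) ps))"
    using ps(1) c ijk by (subst cp_msum_l) auto
  also have "\<dots> = msum_list C (V k) (to (V i) (V j)) (map (\<lambda>(k', x, y). if k' = k then tm (scal C (V k) (cp y c)) x
              else zr (V k) (to (V i) (V j))) ps)"
  proof -
    have "(\<lambda>t. cp t c) ((\<lambda>(k, x, y). cp x y) t) = (\<lambda>(k', x, y). if k' = k then tm (scal C (V k) (cp y c)) x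
              else zr (V k) (to (V i) (V j))) t" if t: "t \<in> set ps" for t
    proof -
      obtain k' x y where t': "t = (k', x, y)" by (cases t) auto
      have h: "k' \<in> I" "ty x (V k') (to (V i) (V j))" "ty y (to (V i) (V j)) (V k')" using ps(1) t t' by auto
      show ?thesis
      proof (cases "k' = k")
        case True
        note s = scal_prop[of k "cp y c"]
        have "cp (cp x y) c = cp x (tm (scal C (V k) (cp y c)) (ii (V k)))"
          using h c ijk True s by simp
        also have "\<dots> = tm (scal C (V k) (cp y c)) x" using h c ijk True s by (subst sc_cp_r) auto
        finally show ?thesis using t' True by simp
      next
        case False
        have "cp y c = zr (V k) (V k')" using homzero[of k k' "cp y c"] h c ijk False by simp
        then show ?thesis using t' False h c ijk by simp
      qed
    qed
    then show ?thesis by (simp only: map_map o_def) (metis (no_types, lifting) map_eq_conv)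
  qed
  finally show ?thesis .
qed

lemma EXPh: assumes ijk: "i \<in> I" "j \<in> I" "k \<in> I"
  and ps: "\<forall>(k, x, y)\<in>set ps. k \<in> I \<and> ty x (V k) (to (V i) (V j)) \<and> ty y (to (V i) (V j)) (V k)"
    "ii (to (V i) (V j)) = msum_list C (to (V i) (V j)) (to (V i) (V j)) (map (\<lambda>(k, x, y). cp x y) ps)"
  and h: "ty h (to (V i) (V j)) (V k)"
  shows "h = msum_list C (to (V i) (V j)) (V k) (map (\<lambda>(k', x, y). if k' = k then tm (scal C (V k) (cp h x)) y
              else zr (to (V i) (V j)) (V k)) ps)"
proof -
  have "h = cp h (ii (to (V i) (V j)))" using h ijk by simp
  also have "\<dots> = cp h (msum_list C (to (V i) (V j)) (to (V i) (V j)) (map (\<lambda>(k, x, y). cp x y) ps))"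
    using ps(2) by simp
  also have "\<dots> = msum_list C (to (V i) (V j)) (V k) (map (cp h) (map (\<lambda>(k, x, y). cp x y) ps))"
    using ps(1) h ijk by (subst cp_msum_r) auto
  also have "\<dots> = msum_list C (to (V i) (V j)) (V k) (map (\<lambda>(k', x, y). if k' = k then tm (scal C (V k) (cp h x)) y
              else zr (to (V i) (V j)) (V k)) ps)"
  proof -
    have "(cp h) ((\<lambda>(k, x, y). cp x y) t) = (\<lambda>(k', x, y). if k' = k then tm (scal C (V k) (cp h x)) y
              else zr (to (V i) (V j)) (V k)) t" if t: "t \<in> set ps" for t
    proof -
      obtain k' x y where t': "t = (k', x, y)" by (cases t) auto
      have hh: "k' \<in> I" "ty x (V k') (to (V i) (V j))" "ty y (to (V i) (V j)) (V k')" using ps(1) t t' by auto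
      show ?thesis
      proof (cases "k' = k")
        case True
        note s = scal_prop[of k "cp h x"]
        have "cp h (cp x y) = cp (tm (scal C (V k) (cp h x)) (ii (V k))) y"
          using hh h ijk True s cp_assoc[of y x h] by simp
        also have "\<dots> = tm (scal C (V k) (cp h x)) y" using hh h ijk True s by (subst sc_cp_l) auto
        finally show ?thesis using t' True by simp
      next
        case False
        have "cp h x = zr (V k') (V k)" using homzero[of k' k "cp h x"] hh h ijk False by simp
        then show ?thesis using t' False hh h ijk cp_assoc[of y x h] by simp
      qed
    qed
    then show ?thesis by (simp only: map_map o_def) (metis (no_types, lifting) map_eq_conv)
  qed
  finally show ?thesis .
qed

end

context psi begin

lemma Hom_ne: assumes "ty g a c" "g \<noteq> zr a c" shows "Hom C a c \<noteq> {zr a c}"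
proof
  assume "Hom C a c = {zr a c}"
  moreover have "g \<in> Hom C a c" using assms by simp
  ultimately show False using assms(2) by blast
qed

lemma back4: assumes "i \<in> I" "j \<in> I" "k \<in> I" "f \<in> M" "dm f = to (V i) (V j)" "cd f = V k"
  shows "cp (tm (d i) (ii (V k))) (tm (ii (V i)) (cp (tm (ii (V (st i))) f) (tm (b (st i)) (ii (V j))))) = f"
  using assms by (simp add: slides slides45 zigs)

lemma Ldual: assumes ijk: "i \<in> I" "j \<in> I" "k \<in> I" and f: "ty f (to (V i) (V j)) (V k)" "f \<noteq> zr (to (V i) (V j)) (V k)"
  shows "P i j"
proof -
  define g where "g = cp (tm (ii (V (st i))) f) (tm (b (st i)) (ii (V j)))"
  have gt: "ty g (V j) (to (V (st i)) (V k))" unfolding g_def using ijk f by simp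
  have bk: "cp (tm (d i) (ii (V k))) (tm (ii (V i)) g) = f" unfolding g_def using back4 ijk f by simp
  have gnz: "g \<noteq> zr (V j) (to (V (st i)) (V k))"
  proof
    assume "g = zr (V j) (to (V (st i)) (V k))"
    then have "f = cp (tm (d i) (ii (V k))) (tm (ii (V i)) (zr (V j) (to (V (st i)) (V k))))" using bk by simp
    then show False using f ijk by simp
  qed
  have "P (st i) k" unfolding P_def using Hom_ne[OF gt gnz] ijk by blast
  then obtain ps where ps: "\<forall>(k', x, y)\<in>set ps. k' \<in> I \<and> ty x (V k') (to (V (st i)) (V k)) \<and> ty y (to (V (st i)) (V k)) (V k')"
    "ii (to (V (st i)) (V k)) = msum_list C (to (V (st i)) (V k)) (to (V (st i)) (V k)) (map (\<lambda>(k, x, y). cp x y) ps)"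
    using decomp[OF st_I[OF ijk(1)] ijk(3)] by blast
  have ge: "g = msum_list C (V j) (to (V (st i)) (V k)) (map (\<lambda>(k', x, y). if k' = j then tm (scal C (V j) (cp y g)) x
              else zr (V j) (to (V (st i)) (V k))) ps)"
    by (rule EXPc) (use ps gt ijk in auto)
  have "\<exists>t\<in>set ps. fst t = j \<and> cp (snd (snd t)) g \<noteq> zr (V j) (V j)"
  proof (rule ccontr)
    assume nz: "\<not> ?thesis"
    have "\<forall>t\<in>set (map (\<lambda>(k', x, y). if k' = j then tm (scal C (V j) (cp y g)) x
              else zr (V j) (to (V (st i)) (V k))) ps). t = zr (V j) (to (V (st i)) (V k))"
    proof
      fix t assume "t \<in> set (map (\<lambda>(k', x, y). if k' = j then tm (scal C (V j) (cp y g)) x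
              else zr (V j) (to (V (st i)) (V k))) ps)"
      then obtain k' x y where t: "(k', x, y) \<in> set ps" "t = (if k' = j then tm (scal C (V j) (cp y g)) x
              else zr (V j) (to (V (st i)) (V k)))" by auto
      show "t = zr (V j) (to (V (st i)) (V k))"
      proof (cases "k' = j")
        case True
        then have "cp y g = zr (V j) (V j)" using nz t(1) by force
        then show ?thesis using t True ps(1) ijk by auto
      qed (use t in simp)
    qed
    then have "g = zr (V j) (to (V (st i)) (V k))" using ge ijk by (simp add: msum_zero)
    then show False using gnz by simp
  qed
  then obtain y x where yx: "(j, x, y) \<in> set ps" "cp y g \<noteq> zr (V j) (V j)" by force
  have yt: "ty y (to (V (st i)) (V k)) (V j)" using ps(1) yx(1) by auto
  have ynz: "y \<noteq> zr (to (V (st i)) (V k)) (V j)"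
  proof
    assume "y = zr (to (V (st i)) (V k)) (V j)"
    then have "cp y g = zr (V j) (V j)" using gt ijk by simp
    then show False using yx by simp
  qed
  define h where "h = cp (tm (ii (V i)) y) (tm (b i) (ii (V k)))"
  have ht: "ty h (V k) (to (V i) (V j))" unfolding h_def using ijk yt by simp
  have bk2: "cp (tm (d (st i)) (ii (V j))) (tm (ii (V (st i))) h) = y"
    unfolding h_def using back4[of "st i" k j y] ijk yt by simp
  have hnz: "h \<noteq> zr (V k) (to (V i) (V j))"
  proof
    assume "h = zr (V k) (to (V i) (V j))"
    then have "y = cp (tm (d (st i)) (ii (V j))) (tm (ii (V (st i))) (zr (V k) (to (V i) (V j))))" using bk2 by simp
    then show False using ynz ijk by simp
  qed
  show "P i j" unfolding P_def using Hom_ne[OF ht hnz] ijk by blast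
qed

lemma nondeg_chk: assumes ijk: "i \<in> I" "j \<in> I" "k \<in> I"
  and c: "ty c1 (V k) (to (V i) (V j))" "ty c2 (V k) (to (V i) (V j))"
  and e: "\<And>f. ty f (to (V i) (V j)) (V k) \<Longrightarrow> scal C (V k) (cp f c1) = scal C (V k) (cp f c2)"
  shows "c1 = c2"
proof (cases "P i j")
  case True
  then obtain ps where ps: "\<forall>(k', x, y)\<in>set ps. k' \<in> I \<and> ty x (V k') (to (V i) (V j)) \<and> ty y (to (V i) (V j)) (V k')"
    "ii (to (V i) (V j)) = msum_list C (to (V i) (V j)) (to (V i) (V j)) (map (\<lambda>(k, x, y). cp x y) ps)"
    using decomp[OF ijk(1,2) True] by blast
  have "c1 = msum_list C (V k) (to (V i) (V j)) (map (\<lambda>(k', x, y). if k' = k then tm (scal C (V k) (cp y c1)) x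
              else zr (V k) (to (V i) (V j))) ps)" by (rule EXPc) (use ps c ijk in auto)
  also have "\<dots> = msum_list C (V k) (to (V i) (V j)) (map (\<lambda>(k', x, y). if k' = k then tm (scal C (V k) (cp y c2)) x
              else zr (V k) (to (V i) (V j))) ps)"
  proof (rule arg_cong[where f="msum_list C (V k) (to (V i) (V j))"], rule map_cong[OF refl])
    fix t assume t: "t \<in> set ps"
    obtain k' x y where t': "t = (k', x, y)" by (cases t) auto
    show "(\<lambda>(k', x, y). if k' = k then tm (scal C (V k) (cp y c1)) x else zr (V k) (to (V i) (V j))) t =
          (\<lambda>(k', x, y). if k' = k then tm (scal C (V k) (cp y c2)) x else zr (V k) (to (V i) (V j))) t"
      using e[of y] ps(1) t t' by auto
  qed
  also have "\<dots> = c2" by (rule EXPc[symmetric]) (use ps c ijk in auto)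
  finally show ?thesis .
next
  case False
  then show ?thesis using notP[OF ijk False c(1)] notP[OF ijk False c(2)] by simp
qed

lemma nondeg_hat: assumes ijk: "i \<in> I" "j \<in> I" "k \<in> I"
  and h: "ty h1 (to (V i) (V j)) (V k)" "ty h2 (to (V i) (V j)) (V k)"
  and e: "\<And>g. ty g (V k) (to (V i) (V j)) \<Longrightarrow> scal C (V k) (cp h1 g) = scal C (V k) (cp h2 g)"
  shows "h1 = h2"
proof (cases "P i j")
  case True
  then obtain ps where ps: "\<forall>(k', x, y)\<in>set ps. k' \<in> I \<and> ty x (V k') (to (V i) (V j)) \<and> ty y (to (V i) (V j)) (V k')"
    "ii (to (V i) (V j)) = msum_list C (to (V i) (V j)) (to (V i) (V j)) (map (\<lambda>(k, x, y). cp x y) ps)"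
    using decomp[OF ijk(1,2) True] by blast
  have "h1 = msum_list C (to (V i) (V j)) (V k) (map (\<lambda>(k', x, y). if k' = k then tm (scal C (V k) (cp h1 x)) y
              else zr (to (V i) (V j)) (V k)) ps)" by (rule EXPh) (use ps h ijk in auto)
  also have "\<dots> = msum_list C (to (V i) (V j)) (V k) (map (\<lambda>(k', x, y). if k' = k then tm (scal C (V k) (cp h2 x)) y
              else zr (to (V i) (V j)) (V k)) ps)"
  proof (rule arg_cong[where f="msum_list C (to (V i) (V j)) (V k)"], rule map_cong[OF refl])
    fix t assume t: "t \<in> set ps"
    obtain k' x y where t': "t = (k', x, y)" by (cases t) auto
    show "(\<lambda>(k', x, y). if k' = k then tm (scal C (V k) (cp h1 x)) y else zr (to (V i) (V j)) (V k)) t =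
          (\<lambda>(k', x, y). if k' = k then tm (scal C (V k) (cp h2 x)) y else zr (to (V i) (V j)) (V k)) t"
      using e[of x] ps(1) t t' by auto
  qed
  also have "\<dots> = h2" by (rule EXPh[symmetric]) (use ps h ijk in auto)
  finally show ?thesis .
next
  case False
  have "h1 = zr (to (V i) (V j)) (V k)" using Ldual[OF ijk h(1)] False by blast
  moreover have "h2 = zr (to (V i) (V j)) (V k)" using Ldual[OF ijk h(2)] False by blast
  ultimately show ?thesis by simp
qed

lemma REPc: assumes ijk: "i \<in> I" "j \<in> I" "k \<in> I"
  and L1: "\<And>f. ty f (to (V i) (V j)) (V k) \<Longrightarrow> ty (\<phi> f) U U"
  and L2: "\<And>f g. ty f (to (V i) (V j)) (V k) \<Longrightarrow> ty g (to (V i) (V j)) (V k) \<Longrightarrow> \<phi> (ad f g) = ad (\<phi> f) (\<phi> g)"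
  and L3: "\<And>s f. ty s U U \<Longrightarrow> ty f (to (V i) (V j)) (V k) \<Longrightarrow> \<phi> (tm s f) = cp s (\<phi> f)"
  shows "\<exists>c. ty c (V k) (to (V i) (V j)) \<and> (\<forall>f. ty f (to (V i) (V j)) (V k) \<longrightarrow> scal C (V k) (cp f c) = \<phi> f)"
proof (cases "P i j")
  case True
  then obtain ps where ps: "\<forall>(k', x, y)\<in>set ps. k' \<in> I \<and> ty x (V k') (to (V i) (V j)) \<and> ty y (to (V i) (V j)) (V k')"
    "ii (to (V i) (V j)) = msum_list C (to (V i) (V j)) (to (V i) (V j)) (map (\<lambda>(k, x, y). cp x y) ps)"
    using decomp[OF ijk(1,2) True] by blast
  have z0: "\<phi> (zr (to (V i) (V j)) (V k)) = zr U U" by (rule lin_zero) (use ijk L1 L2 in auto)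
  define G where "G = (\<lambda>(k', x, y). if k' = k then tm (\<phi> y) x else zr (V k) (to (V i) (V j)))"
  define c where "c = msum_list C (V k) (to (V i) (V j)) (map G ps)"
  have Gt: "\<forall>t\<in>set (map G ps). ty t (V k) (to (V i) (V j))"
  proof
    fix t assume "t \<in> set (map G ps)"
    then obtain k' x y where t: "(k', x, y) \<in> set ps" "t = G (k', x, y)" by auto
    then show "ty t (V k) (to (V i) (V j))" using ps(1) L1[of y] ijk unfolding G_def by (cases "k' = k") auto
  qed
  have ct: "ty c (V k) (to (V i) (V j))" unfolding c_def using Gt ijk by (intro msum_ty) auto
  have "scal C (V k) (cp f c) = \<phi> f" if f: "ty f (to (V i) (V j)) (V k)" for f
  proof -
    define H where "H = (\<lambda>(k', x, y). if k' = k then cp (\<phi> y) (scal C (V k) (cp f x)) else zr U U)"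
    have ft: "\<forall>t\<in>set (map (cp f) (map G ps)). ty t (V k) (V k)" using Gt f by auto
    have "scal C (V k) (cp f c) = scal C (V k) (msum_list C (V k) (V k) (map (cp f) (map G ps)))"
      unfolding c_def using Gt f ijk by (subst cp_msum_r) auto
    also have "\<dots> = msum_list C U U (map (scal C (V k)) (map (cp f) (map G ps)))"
      using ft ijk by (intro scal_msum) auto
    also have "\<dots> = msum_list C U U (map H ps)"
    proof (rule arg_cong[where f="msum_list C U U"])
      show "map (scal C (V k)) (map (cp f) (map G ps)) = map H ps"
      proof (simp only: map_map o_def, rule map_cong[OF refl])
        fix t assume t: "t \<in> set ps"
        obtain k' x y where t': "t = (k', x, y)" by (cases t) auto
        have h: "k' \<in> I" "ty x (V k') (to (V i) (V j))" "ty y (to (V i) (V j)) (V k')" using ps(1) t t' by auto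
        show "scal C (V k) (cp f (G t)) = H t"
        proof (cases "k' = k")
          case True
          have py: "ty (\<phi> y) U U" using L1[of y] h True by simp
          have "cp f (tm (\<phi> y) x) = tm (\<phi> y) (cp f x)" using py h f True by (intro sc_cp_r) auto
          then show ?thesis unfolding G_def H_def t' using True py h f ijk by (simp add: scal_sc)
        next
          case False
          then show ?thesis unfolding G_def H_def t' using h f ijk by simp
        qed
      qed
    qed
    also have "\<dots> = \<phi> f"
    proof -
      define G' where "G' = (\<lambda>(k', x, y). if k' = k then tm (scal C (V k) (cp f x)) y else zr (to (V i) (V j)) (V k))"
      have fe: "f = msum_list C (to (V i) (V j)) (V k) (map G' ps)" unfolding G'_def by (rule EXPh) (use ps f ijk in auto)
      have G't: "\<forall>t\<in>set (map G' ps). ty t (to (V i) (V j)) (V k)"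
      proof
        fix t assume "t \<in> set (map G' ps)"
        then obtain k' x y where t: "(k', x, y) \<in> set ps" "t = G' (k', x, y)" by auto
        then show "ty t (to (V i) (V j)) (V k)" using ps(1) f ijk unfolding G'_def by (cases "k' = k") auto
      qed
      have "\<phi> f = msum_list C U U (map \<phi> (map G' ps))"
        by (subst fe, rule lin_msum) (use ijk L1 L2 G't in auto)
      also have "\<dots> = msum_list C U U (map H ps)"
      proof (rule arg_cong[where f="msum_list C U U"])
        show "map \<phi> (map G' ps) = map H ps"
        proof (simp only: map_map o_def, rule map_cong[OF refl])
          fix t assume t: "t \<in> set ps"
          obtain k' x y where t': "t = (k', x, y)" by (cases t) auto
          have h: "k' \<in> I" "ty x (V k') (to (V i) (V j))" "ty y (to (V i) (V j)) (V k')" using ps(1) t t' by auto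
          show "\<phi> (G' t) = H t"
          proof (cases "k' = k")
            case True
            have py: "ty (\<phi> y) U U" using L1[of y] h True by simp
            have sx: "ty (scal C (V k) (cp f x)) U U" using h f True ijk by simp
            have "\<phi> (tm (scal C (V k) (cp f x)) y) = cp (scal C (V k) (cp f x)) (\<phi> y)"
              using L3[of "scal C (V k) (cp f x)" y] sx h True by simp
            also have "\<dots> = cp (\<phi> y) (scal C (V k) (cp f x))" using sx py K_comm by simp
            finally show ?thesis unfolding G'_def H_def t' using True by simp
          next
            case False
            then show ?thesis unfolding G'_def H_def t' using z0 by simp
          qed
        qed
      qed
      finally show ?thesis by simp
    qed
    finally show ?thesis .
  qed
  then show ?thesis using ct by blast
next
  case False
  have z0: "\<phi> (zr (to (V i) (V j)) (V k)) = zr U U" by (rule lin_zero) (use ijk L1 L2 in auto)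
  have "scal C (V k) (cp f (zr (V k) (to (V i) (V j)))) = \<phi> f" if f: "ty f (to (V i) (V j)) (V k)" for f
  proof -
    have "f = zr (to (V i) (V j)) (V k)" using Ldual[OF ijk f] False by blast
    then show ?thesis using z0 ijk by simp
  qed
  then show ?thesis using ijk by (intro exI[of _ "zr (V k) (to (V i) (V j))"]) auto
qed

lemma REPh: assumes ijk: "i \<in> I" "j \<in> I" "k \<in> I"
  and L1: "\<And>g. ty g (V k) (to (V i) (V j)) \<Longrightarrow> ty (\<psi> g) U U"
  and L2: "\<And>f g. ty f (V k) (to (V i) (V j)) \<Longrightarrow> ty g (V k) (to (V i) (V j)) \<Longrightarrow> \<psi> (ad f g) = ad (\<psi> f) (\<psi> g)"
  and L3: "\<And>s g. ty s U U \<Longrightarrow> ty g (V k) (to (V i) (V j)) \<Longrightarrow> \<psi> (tm s g) = cp s (\<psi> g)"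
  shows "\<exists>h. ty h (to (V i) (V j)) (V k) \<and> (\<forall>g. ty g (V k) (to (V i) (V j)) \<longrightarrow> scal C (V k) (cp h g) = \<psi> g)"
proof (cases "P i j")
  case True
  then obtain ps where ps: "\<forall>(k', x, y)\<in>set ps. k' \<in> I \<and> ty x (V k') (to (V i) (V j)) \<and> ty y (to (V i) (V j)) (V k')"
    "ii (to (V i) (V j)) = msum_list C (to (V i) (V j)) (to (V i) (V j)) (map (\<lambda>(k, x, y). cp x y) ps)"
    using decomp[OF ijk(1,2) True] by blast
  have z0: "\<psi> (zr (V k) (to (V i) (V j))) = zr U U" by (rule lin_zero) (use ijk L1 L2 in auto)
  define G where "G = (\<lambda>(k', x, y). if k' = k then tm (\<psi> x) y else zr (to (V i) (V j)) (V k))"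
  define h where "h = msum_list C (to (V i) (V j)) (V k) (map G ps)"
  have Gt: "\<forall>t\<in>set (map G ps). ty t (to (V i) (V j)) (V k)"
  proof
    fix t assume "t \<in> set (map G ps)"
    then obtain k' x y where t: "(k', x, y) \<in> set ps" "t = G (k', x, y)" by auto
    then show "ty t (to (V i) (V j)) (V k)" using ps(1) L1[of x] ijk unfolding G_def by (cases "k' = k") auto
  qed
  have ht: "ty h (to (V i) (V j)) (V k)" unfolding h_def using Gt ijk by (intro msum_ty) auto
  have "scal C (V k) (cp h g) = \<psi> g" if g: "ty g (V k) (to (V i) (V j))" for g
  proof -
    define H where "H = (\<lambda>(k', x, y). if k' = k then cp (\<psi> x) (scal C (V k) (cp y g)) else zr U U)"
    have ft: "\<forall>t\<in>set (map (\<lambda>t. cp t g) (map G ps)). ty t (V k) (V k)" using Gt g by auto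
    have "scal C (V k) (cp h g) = scal C (V k) (msum_list C (V k) (V k) (map (\<lambda>t. cp t g) (map G ps)))"
      unfolding h_def using Gt g ijk by (subst cp_msum_l) auto
    also have "\<dots> = msum_list C U U (map (scal C (V k)) (map (\<lambda>t. cp t g) (map G ps)))"
      using ft ijk by (intro scal_msum) auto
    also have "\<dots> = msum_list C U U (map H ps)"
    proof (rule arg_cong[where f="msum_list C U U"])
      show "map (scal C (V k)) (map (\<lambda>t. cp t g) (map G ps)) = map H ps"
      proof (simp only: map_map o_def, rule map_cong[OF refl])
        fix t assume t: "t \<in> set ps"
        obtain k' x y where t': "t = (k', x, y)" by (cases t) auto
        have hh: "k' \<in> I" "ty x (V k') (to (V i) (V j))" "ty y (to (V i) (V j)) (V k')" using ps(1) t t' by auto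
        show "scal C (V k) (cp (G t) g) = H t"
        proof (cases "k' = k")
          case True
          have py: "ty (\<psi> x) U U" using L1[of x] hh True by simp
          have "cp (tm (\<psi> x) y) g = tm (\<psi> x) (cp y g)" using py hh g True by (intro sc_cp_l) auto
          then show ?thesis unfolding G_def H_def t' using True py hh g ijk by (simp add: scal_sc)
        next
          case False
          then show ?thesis unfolding G_def H_def t' using hh g ijk by simp
        qed
      qed
    qed
    also have "\<dots> = \<psi> g"
    proof -
      define G' where "G' = (\<lambda>(k', x, y). if k' = k then tm (scal C (V k) (cp y g)) x else zr (V k) (to (V i) (V j)))"
      have ge: "g = msum_list C (V k) (to (V i) (V j)) (map G' ps)" unfolding G'_def by (rule EXPc) (use ps g ijk in auto)
      have G't: "\<forall>t\<in>set (map G' ps). ty t (V k) (to (V i) (V j))"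
      proof
        fix t assume "t \<in> set (map G' ps)"
        then obtain k' x y where t: "(k', x, y) \<in> set ps" "t = G' (k', x, y)" by auto
        then show "ty t (V k) (to (V i) (V j))" using ps(1) g ijk unfolding G'_def by (cases "k' = k") auto
      qed
      have "\<psi> g = msum_list C U U (map \<psi> (map G' ps))"
        by (subst ge, rule lin_msum) (use ijk L1 L2 G't in auto)
      also have "\<dots> = msum_list C U U (map H ps)"
      proof (rule arg_cong[where f="msum_list C U U"])
        show "map \<psi> (map G' ps) = map H ps"
        proof (simp only: map_map o_def, rule map_cong[OF refl])
          fix t assume t: "t \<in> set ps"
          obtain k' x y where t': "t = (k', x, y)" by (cases t) auto
          have hh: "k' \<in> I" "ty x (V k') (to (V i) (V j))" "ty y (to (V i) (V j)) (V k')" using ps(1) t t' by auto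
          show "\<psi> (G' t) = H t"
          proof (cases "k' = k")
            case True
            have py: "ty (\<psi> x) U U" using L1[of x] hh True by simp
            have sx: "ty (scal C (V k) (cp y g)) U U" using hh g True ijk by simp
            have "\<psi> (tm (scal C (V k) (cp y g)) x) = cp (scal C (V k) (cp y g)) (\<psi> x)"
              using L3[of "scal C (V k) (cp y g)" x] sx hh True by simp
            also have "\<dots> = cp (\<psi> x) (scal C (V k) (cp y g))" using sx py K_comm by simp
            finally show ?thesis unfolding G'_def H_def t' using True by simp
          next
            case False
            then show ?thesis unfolding G'_def H_def t' using z0 by simp
          qed
        qed
      qed
      finally show ?thesis by simp
    qed
    finally show ?thesis .
  qed
  then show ?thesis using ht by blast
next
  case False
  have z0: "\<psi> (zr (V k) (to (V i) (V j))) = zr U U" by (rule lin_zero) (use ijk L1 L2 in auto)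
  have "scal C (V k) (cp (zr (to (V i) (V j)) (V k)) g) = \<psi> g" if g: "ty g (V k) (to (V i) (V j))" for g
  proof -
    have "g = zr (V k) (to (V i) (V j))" using notP[OF ijk False g] .
    then show ?thesis using z0 ijk by simp
  qed
  then show ?thesis using ijk by (intro exI[of _ "zr (to (V i) (V j)) (V k)"]) auto
qed

end

context psi begin

lemma LIN1: assumes r: "r \<in> I" and X: "X \<in> Ob'" and a': "a' \<in> Ob'" and b': "b' \<in> Ob'"
  and Pm: "ty Pm (to X b') (V r)" and Q: "ty Q (V r) (to X a')"
  shows "\<And>f. ty f a' b' \<Longrightarrow> ty (scal C (V r) (cp Pm (cp (tm (ii X) f) Q))) U U"
    "\<And>f g. ty f a' b' \<Longrightarrow> ty g a' b' \<Longrightarrow> scal C (V r) (cp Pm (cp (tm (ii X) (ad f g)) Q))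
        = ad (scal C (V r) (cp Pm (cp (tm (ii X) f) Q))) (scal C (V r) (cp Pm (cp (tm (ii X) g) Q)))"
    "\<And>s f. ty s U U \<Longrightarrow> ty f a' b' \<Longrightarrow> scal C (V r) (cp Pm (cp (tm (ii X) (tm s f)) Q))
        = cp s (scal C (V r) (cp Pm (cp (tm (ii X) f) Q)))"
proof -
  fix f assume f: "ty f a' b'"
  show "ty (scal C (V r) (cp Pm (cp (tm (ii X) f) Q))) U U" using assms f by simp
next
  fix f g assume f: "ty f a' b'" and g: "ty g a' b'"
  have "tm (ii X) (ad f g) = ad (tm (ii X) f) (tm (ii X) g)" using assms f g by (intro tm_ad_r) auto
  moreover have "cp (ad (tm (ii X) f) (tm (ii X) g)) Q = ad (cp (tm (ii X) f) Q) (cp (tm (ii X) g) Q)"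
    using assms f g by (intro cp_ad_l) auto
  moreover have "cp Pm (ad (cp (tm (ii X) f) Q) (cp (tm (ii X) g) Q)) = ad (cp Pm (cp (tm (ii X) f) Q)) (cp Pm (cp (tm (ii X) g) Q))"
    using assms f g by (intro cp_ad_r) auto
  ultimately show "scal C (V r) (cp Pm (cp (tm (ii X) (ad f g)) Q))
        = ad (scal C (V r) (cp Pm (cp (tm (ii X) f) Q))) (scal C (V r) (cp Pm (cp (tm (ii X) g) Q)))"
    using assms f g by (simp add: scal_add)
next
  fix s f assume s: "ty s U U" and f: "ty f a' b'"
  have "tm (ii X) (tm s f) = tm s (tm (ii X) f)" using assms f s by (intro sc_tm_r) auto
  moreover have "cp (tm s (tm (ii X) f)) Q = tm s (cp (tm (ii X) f) Q)" using assms f s by (intro sc_cp_l) auto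
  moreover have "cp Pm (tm s (cp (tm (ii X) f) Q)) = tm s (cp Pm (cp (tm (ii X) f) Q))" using assms f s by (intro sc_cp_r) auto
  ultimately show "scal C (V r) (cp Pm (cp (tm (ii X) (tm s f)) Q)) = cp s (scal C (V r) (cp Pm (cp (tm (ii X) f) Q)))"
    using assms f s by (simp add: scal_sc)
qed

lemma LIN2: assumes r: "r \<in> I" and X: "X \<in> Ob'" and a': "a' \<in> Ob'" and b': "b' \<in> Ob'"
  and Pm: "ty Pm (to b' X) (V r)" and Q: "ty Q (V r) (to a' X)"
  shows "\<And>f. ty f a' b' \<Longrightarrow> ty (scal C (V r) (cp Pm (cp (tm f (ii X)) Q))) U U"
    "\<And>f g. ty f a' b' \<Longrightarrow> ty g a' b' \<Longrightarrow> scal C (V r) (cp Pm (cp (tm (ad f g) (ii X)) Q))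
        = ad (scal C (V r) (cp Pm (cp (tm f (ii X)) Q))) (scal C (V r) (cp Pm (cp (tm g (ii X)) Q)))"
    "\<And>s f. ty s U U \<Longrightarrow> ty f a' b' \<Longrightarrow> scal C (V r) (cp Pm (cp (tm (tm s f) (ii X)) Q))
        = cp s (scal C (V r) (cp Pm (cp (tm f (ii X)) Q)))"
proof -
  fix f assume f: "ty f a' b'"
  show "ty (scal C (V r) (cp Pm (cp (tm f (ii X)) Q))) U U" using assms f by simp
next
  fix f g assume f: "ty f a' b'" and g: "ty g a' b'"
  have "tm (ad f g) (ii X) = ad (tm f (ii X)) (tm g (ii X))" using assms f g by (intro tm_ad_l) auto
  moreover have "cp (ad (tm f (ii X)) (tm g (ii X))) Q = ad (cp (tm f (ii X)) Q) (cp (tm g (ii X)) Q)"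
    using assms f g by (intro cp_ad_l) auto
  moreover have "cp Pm (ad (cp (tm f (ii X)) Q) (cp (tm g (ii X)) Q)) = ad (cp Pm (cp (tm f (ii X)) Q)) (cp Pm (cp (tm g (ii X)) Q))"
    using assms f g by (intro cp_ad_r) auto
  ultimately show "scal C (V r) (cp Pm (cp (tm (ad f g) (ii X)) Q))
        = ad (scal C (V r) (cp Pm (cp (tm f (ii X)) Q))) (scal C (V r) (cp Pm (cp (tm g (ii X)) Q)))"
    using assms f g by (simp add: scal_add)
next
  fix s f assume s: "ty s U U" and f: "ty f a' b'"
  have "tm (tm s f) (ii X) = tm s (tm f (ii X))" using assms f s by (intro tm_assoc) auto
  moreover have "cp (tm s (tm f (ii X))) Q = tm s (cp (tm f (ii X)) Q)" using assms f s by (intro sc_cp_l) auto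
  moreover have "cp Pm (tm s (cp (tm f (ii X)) Q)) = tm s (cp Pm (cp (tm f (ii X)) Q))" using assms f s by (intro sc_cp_r) auto
  ultimately show "scal C (V r) (cp Pm (cp (tm (tm s f) (ii X)) Q)) = cp s (scal C (V r) (cp Pm (cp (tm f (ii X)) Q)))"
    using assms f s by (simp add: scal_sc)
qed

lemma nondeg_form: assumes z: "z1 \<in> Hspace C I V" "z2 \<in> Hspace C I V"
  and e: "\<And>x. x \<in> Hspace C I V \<Longrightarrow> hform C I V x z1 = hform C I V x z2"
  shows "z1 = z2"
proof -
  have h: "pihat z1 i j k = pihat z2 i j k \<and> picheck z1 i j k = picheck z2 i j k" for i j k
  proof (cases "i \<in> I \<and> j \<in> I \<and> k \<in> I")
    case True
    then have ijk: "i \<in> I" "j \<in> I" "k \<in> I" by auto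
    have "pihat z1 i j k = pihat z2 i j k"
    proof (rule nondeg_hat[OF ijk])
      fix g assume g: "ty g (V k) (to (V i) (V j))"
      have "hform C I V (sgc i j k g) z1 = hform C I V (sgc i j k g) z2" using g ijk by (intro e sgc_H) auto
      then show "scal C (V k) (cp (pihat z1 i j k) g) = scal C (V k) (cp (pihat z2 i j k) g)"
        using hform_sgc[OF z(1) ijk] hform_sgc[OF z(2) ijk] g by simp
    qed (use z ijk in auto)
    moreover have "picheck z1 i j k = picheck z2 i j k"
    proof (rule nondeg_chk[OF ijk])
      fix f assume f: "ty f (to (V i) (V j)) (V k)"
      have "hform C I V (sgh i j k f) z1 = hform C I V (sgh i j k f) z2" using f ijk by (intro e sgh_H) auto
      then show "scal C (V k) (cp f (picheck z1 i j k)) = scal C (V k) (cp f (picheck z2 i j k))"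
        using hform_sgh[OF z(1) ijk] hform_sgh[OF z(2) ijk] f by simp
    qed (use z ijk in auto)
    ultimately show ?thesis by simp
  next
    case False
    then show ?thesis using z unfolding Hspace_def by auto
  qed
  show ?thesis
    using h unfolding pihat_def picheck_def by (intro prod_eqI ext) auto
qed

lemma transp_eq: assumes "z \<in> Hspace C I V" "\<And>x. x \<in> Hspace C I V \<Longrightarrow> hform C I V (F x) y = hform C I V x z"
  shows "transp C I V F y = z"
  unfolding transp_def
proof (rule the_equality)
  show "z \<in> Hspace C I V \<and> (\<forall>x\<in>Hspace C I V. hform C I V (F x) y = hform C I V x z)" using assms by auto
  fix z' assume z': "z' \<in> Hspace C I V \<and> (\<forall>x\<in>Hspace C I V. hform C I V (F x) y = hform C I V x z')"
  show "z' = z" using z' assms by (intro nondeg_form) auto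
qed

lemma bij_inv: assumes "\<And>a. a \<in> S \<Longrightarrow> h a \<in> S" "\<And>a. a \<in> S \<Longrightarrow> h (h a) = a"
  shows "bij_betw h S S"
  by (rule bij_betw_byWitness[where f'=h]) (use assms in auto)


lemma pihat_opA: "p \<in> I \<Longrightarrow> q \<in> I \<Longrightarrow> r \<in> I \<Longrightarrow> pihat (opA C I V st b d x) p q r =
   cp (tm (d p) (ii (V r))) (tm (ii (V p)) (picheck x (st p) r q))"
  and picheck_opA: "p \<in> I \<Longrightarrow> q \<in> I \<Longrightarrow> r \<in> I \<Longrightarrow> picheck (opA C I V st b d x) p q r =
   cp (tm (ii (V p)) (pihat x (st p) r q)) (tm (b p) (ii (V r)))"
  unfolding opA_def pihat_def[of "(_, _)"] picheck_def[of "(_, _)"] by (simp_all add: pihat_def picheck_def)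

lemma pihat_opB: "p \<in> I \<Longrightarrow> q \<in> I \<Longrightarrow> r \<in> I \<Longrightarrow> pihat (opB C I V st b d x) p q r =
   cp (tm (ii (V r)) (d (st q))) (tm (picheck x r (st q) p) (ii (V q)))"
  and picheck_opB: "p \<in> I \<Longrightarrow> q \<in> I \<Longrightarrow> r \<in> I \<Longrightarrow> picheck (opB C I V st b d x) p q r =
   cp (tm (pihat x r (st q) p) (ii (V q))) (tm (ii (V r)) (b (st q)))"
  unfolding opB_def pihat_def[of "(_, _)"] picheck_def[of "(_, _)"] by (simp_all add: pihat_def picheck_def)

definition phiA where "phiA y i j k f = scal C (V j) (cp (pihat y (st i) k j) (cp (tm (ii (V (st i))) f) (tm (b (st i)) (ii (V j)))))"
definition psiA where "psiA y i j k g = scal C (V j) (cp (tm (d (st i)) (ii (V j))) (cp (tm (ii (V (st i))) g) (picheck y (st i) k j)))"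

lemma repA_chk: assumes y: "y \<in> Hspace C I V" and ijk: "i \<in> I" "j \<in> I" "k \<in> I"
  shows "\<exists>c. ty c (V k) (to (V i) (V j)) \<and> (\<forall>f. ty f (to (V i) (V j)) (V k) \<longrightarrow> scal C (V k) (cp f c) = phiA y i j k f)"
proof -
  note L = LIN1[of j "V (st i)" "to (V i) (V j)" "V k" "pihat y (st i) k j" "tm (b (st i)) (ii (V j))"]
  have L': "\<And>f. ty f (to (V i) (V j)) (V k) \<Longrightarrow> ty (scal C (V j) (cp (pihat y (st i) k j) (cp (tm (ii (V (st i))) f) (tm (b (st i)) (ii (V j)))))) U U"
    "\<And>f g. ty f (to (V i) (V j)) (V k) \<Longrightarrow> ty g (to (V i) (V j)) (V k) \<Longrightarrow> scal C (V j) (cp (pihat y (st i) k j) (cp (tm (ii (V (st i))) (ad f g)) (tm (b (st i)) (ii (V j)))))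
        = ad (scal C (V j) (cp (pihat y (st i) k j) (cp (tm (ii (V (st i))) f) (tm (b (st i)) (ii (V j)))))) (scal C (V j) (cp (pihat y (st i) k j) (cp (tm (ii (V (st i))) g) (tm (b (st i)) (ii (V j))))))"
    "\<And>s f. ty s U U \<Longrightarrow> ty f (to (V i) (V j)) (V k) \<Longrightarrow> scal C (V j) (cp (pihat y (st i) k j) (cp (tm (ii (V (st i))) (tm s f)) (tm (b (st i)) (ii (V j)))))
        = cp s (scal C (V j) (cp (pihat y (st i) k j) (cp (tm (ii (V (st i))) f) (tm (b (st i)) (ii (V j))))))"
    using L y ijk by simp_all
  show ?thesis unfolding phiA_def by (rule REPc[OF ijk L'])
qed

lemma repA_hat: assumes y: "y \<in> Hspace C I V" and ijk: "i \<in> I" "j \<in> I" "k \<in> I"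
  shows "\<exists>h. ty h (to (V i) (V j)) (V k) \<and> (\<forall>g. ty g (V k) (to (V i) (V j)) \<longrightarrow> scal C (V k) (cp h g) = psiA y i j k g)"
proof -
  note L = LIN1[of j "V (st i)" "V k" "to (V i) (V j)" "tm (d (st i)) (ii (V j))" "picheck y (st i) k j"]
  have L': "\<And>f. ty f (V k) (to (V i) (V j)) \<Longrightarrow> ty (scal C (V j) (cp (tm (d (st i)) (ii (V j))) (cp (tm (ii (V (st i))) f) (picheck y (st i) k j)))) U U"
    "\<And>f g. ty f (V k) (to (V i) (V j)) \<Longrightarrow> ty g (V k) (to (V i) (V j)) \<Longrightarrow> scal C (V j) (cp (tm (d (st i)) (ii (V j))) (cp (tm (ii (V (st i))) (ad f g)) (picheck y (st i) k j)))
        = ad (scal C (V j) (cp (tm (d (st i)) (ii (V j))) (cp (tm (ii (V (st i))) f) (picheck y (st i) k j)))) (scal C (V j) (cp (tm (d (st i)) (ii (V j))) (cp (tm (ii (V (st i))) g) (picheck y (st i) k j))))"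
    "\<And>s f. ty s U U \<Longrightarrow> ty f (V k) (to (V i) (V j)) \<Longrightarrow> scal C (V j) (cp (tm (d (st i)) (ii (V j))) (cp (tm (ii (V (st i))) (tm s f)) (picheck y (st i) k j)))
        = cp s (scal C (V j) (cp (tm (d (st i)) (ii (V j))) (cp (tm (ii (V (st i))) f) (picheck y (st i) k j))))"
    using L y ijk by simp_all
  show ?thesis unfolding psiA_def by (rule REPh[OF ijk L'])
qed


definition zA where "zA y = (
  (\<lambda>i j k. if i \<in> I \<and> j \<in> I \<and> k \<in> I then
     (if picheck y (st i) k j = zr (V j) (to (V (st i)) (V k)) then zr (to (V i) (V j)) (V k)
      else (SOME h. ty h (to (V i) (V j)) (V k) \<and> (\<forall>g. ty g (V k) (to (V i) (V j)) \<longrightarrow> scal C (V k) (cp h g) = psiA y i j k g)))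
     else undefined),
  (\<lambda>i j k. if i \<in> I \<and> j \<in> I \<and> k \<in> I then
     (if pihat y (st i) k j = zr (to (V (st i)) (V k)) (V j) then zr (V k) (to (V i) (V j))
      else (SOME c. ty c (V k) (to (V i) (V j)) \<and> (\<forall>f. ty f (to (V i) (V j)) (V k) \<longrightarrow> scal C (V k) (cp f c) = phiA y i j k f)))
     else undefined))"

lemma zA_hat: assumes y: "y \<in> Hspace C I V" and ijk: "i \<in> I" "j \<in> I" "k \<in> I"
  shows "ty (pihat (zA y) i j k) (to (V i) (V j)) (V k) \<and>
    (\<forall>g. ty g (V k) (to (V i) (V j)) \<longrightarrow> scal C (V k) (cp (pihat (zA y) i j k) g) = psiA y i j k g)"
proof (cases "picheck y (st i) k j = zr (V j) (to (V (st i)) (V k))")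
  case True
  then show ?thesis using ijk y unfolding zA_def pihat_def[of "(_, _)"] psiA_def by simp
next
  case False
  then have e: "pihat (zA y) i j k = (SOME h. ty h (to (V i) (V j)) (V k) \<and> (\<forall>g. ty g (V k) (to (V i) (V j)) \<longrightarrow> scal C (V k) (cp h g) = psiA y i j k g))"
    using ijk unfolding zA_def pihat_def[of "(_, _)"] by simp
  show ?thesis unfolding e by (rule someI_ex[OF repA_hat[OF y ijk]])
qed

lemma zA_chk: assumes y: "y \<in> Hspace C I V" and ijk: "i \<in> I" "j \<in> I" "k \<in> I"
  shows "ty (picheck (zA y) i j k) (V k) (to (V i) (V j)) \<and>
    (\<forall>f. ty f (to (V i) (V j)) (V k) \<longrightarrow> scal C (V k) (cp f (picheck (zA y) i j k)) = phiA y i j k f)"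
proof (cases "pihat y (st i) k j = zr (to (V (st i)) (V k)) (V j)")
  case True
  then show ?thesis using ijk y unfolding zA_def picheck_def[of "(_, _)"] phiA_def by simp
next
  case False
  then have e: "picheck (zA y) i j k = (SOME c. ty c (V k) (to (V i) (V j)) \<and> (\<forall>f. ty f (to (V i) (V j)) (V k) \<longrightarrow> scal C (V k) (cp f c) = phiA y i j k f))"
    using ijk unfolding zA_def picheck_def[of "(_, _)"] by simp
  show ?thesis unfolding e by (rule someI_ex[OF repA_chk[OF y ijk]])
qed

lemma zA_H: assumes y: "y \<in> Hspace C I V" shows "zA y \<in> Hspace C I V"
proof -
  let ?hy = "{(a, c, e). a \<in> I \<and> c \<in> I \<and> e \<in> I \<and> pihat y a c e \<noteq> zr (to (V a) (V c)) (V e)}"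
  let ?cy = "{(a, c, e). a \<in> I \<and> c \<in> I \<and> e \<in> I \<and> picheck y a c e \<noteq> zr (V e) (to (V a) (V c))}"
  have fy: "finite ?hy" "finite ?cy" using y unfolding Hspace_def by auto
  have s1: "{(i, j, k). i \<in> I \<and> j \<in> I \<and> k \<in> I \<and> pihat (zA y) i j k \<noteq> zr (to (V i) (V j)) (V k)}
     \<subseteq> (\<lambda>(a, c, e). (st a, e, c)) ` ?cy"
  proof
    fix t assume t: "t \<in> {(i, j, k). i \<in> I \<and> j \<in> I \<and> k \<in> I \<and> pihat (zA y) i j k \<noteq> zr (to (V i) (V j)) (V k)}"
    then obtain i j k where ijk: "t = (i, j, k)" "i \<in> I" "j \<in> I" "k \<in> I" "pihat (zA y) i j k \<noteq> zr (to (V i) (V j)) (V k)" by auto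
    then have "picheck y (st i) k j \<noteq> zr (V j) (to (V (st i)) (V k))" unfolding zA_def pihat_def[of "(_, _)"] by auto
    then have "(st i, k, j) \<in> ?cy" using ijk by auto
    moreover have "t = (\<lambda>(a, c, e). (st a, e, c)) (st i, k, j)" using ijk by simp
    ultimately show "t \<in> (\<lambda>(a, c, e). (st a, e, c)) ` ?cy" by blast
  qed
  have s2: "{(i, j, k). i \<in> I \<and> j \<in> I \<and> k \<in> I \<and> picheck (zA y) i j k \<noteq> zr (V k) (to (V i) (V j))}
     \<subseteq> (\<lambda>(a, c, e). (st a, e, c)) ` ?hy"
  proof
    fix t assume t: "t \<in> {(i, j, k). i \<in> I \<and> j \<in> I \<and> k \<in> I \<and> picheck (zA y) i j k \<noteq> zr (V k) (to (V i) (V j))}"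
    then obtain i j k where ijk: "t = (i, j, k)" "i \<in> I" "j \<in> I" "k \<in> I" "picheck (zA y) i j k \<noteq> zr (V k) (to (V i) (V j))" by auto
    then have "pihat y (st i) k j \<noteq> zr (to (V (st i)) (V k)) (V j)" unfolding zA_def picheck_def[of "(_, _)"] by auto
    then have "(st i, k, j) \<in> ?hy" using ijk by auto
    moreover have "t = (\<lambda>(a, c, e). (st a, e, c)) (st i, k, j)" using ijk by simp
    ultimately show "t \<in> (\<lambda>(a, c, e). (st a, e, c)) ` ?hy" by blast
  qed
  have f1: "finite {(i, j, k). i \<in> I \<and> j \<in> I \<and> k \<in> I \<and> pihat (zA y) i j k \<noteq> zr (to (V i) (V j)) (V k)}"
    by (rule finite_subset[OF s1]) (use fy in blast)
  have f2: "finite {(i, j, k). i \<in> I \<and> j \<in> I \<and> k \<in> I \<and> picheck (zA y) i j k \<noteq> zr (V k) (to (V i) (V j))}"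
    by (rule finite_subset[OF s2]) (use fy in blast)
  show ?thesis unfolding Hspace_def mem_Collect_eq
  proof (intro conjI)
    show "\<forall>i\<in>I. \<forall>j\<in>I. \<forall>k\<in>I. pihat (zA y) i j k \<in> Hom C (to (V i) (V j)) (V k) \<and>
        picheck (zA y) i j k \<in> Hom C (V k) (to (V i) (V j))"
      using zA_hat[OF y] zA_chk[OF y] by simp
    show "\<forall>i j k. \<not> (i \<in> I \<and> j \<in> I \<and> k \<in> I) \<longrightarrow> pihat (zA y) i j k = undefined \<and> picheck (zA y) i j k = undefined"
      unfolding zA_def pihat_def picheck_def by auto
  qed (use f1 f2 in auto)
qed

lemma zA_prop: assumes y: "y \<in> Hspace C I V" and x: "x \<in> Hspace C I V"
  shows "hform C I V (opA C I V st b d x) y = hform C I V x (zA y)"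
  unfolding hform_def
proof (rule KS_reindex[where h="\<lambda>(i, j, k). (st i, k, j)"])
  show "bij_betw (\<lambda>(i, j, k). (st i, k, j)) (I \<times> I \<times> I) (I \<times> I \<times> I)" by (rule bij_inv) auto
  fix a assume a: "a \<in> I \<times> I \<times> I"
  then obtain i j k where ijk: "a = (i, j, k)" "i \<in> I" "j \<in> I" "k \<in> I" by auto
  have c: "scal C (V k) (cp (pihat x i j k) (picheck (zA y) i j k)) = phiA y i j k (pihat x i j k)"
    using zA_chk[OF y ijk(2-4)] x ijk by simp
  have h: "scal C (V k) (cp (pihat (zA y) i j k) (picheck x i j k)) = psiA y i j k (picheck x i j k)"
    using zA_hat[OF y ijk(2-4)] x ijk by simp
  have l: "(case (st i, k, j) of (i, j, k) \<Rightarrow> ad (scal C (V k) (cp (pihat (opA C I V st b d x) i j k) (picheck y i j k)))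
            (scal C (V k) (cp (pihat y i j k) (picheck (opA C I V st b d x) i j k))))
     = ad (psiA y i j k (picheck x i j k)) (phiA y i j k (pihat x i j k))"
    using ijk x y by (simp add: pihat_opA picheck_opA psiA_def phiA_def)
  show "(case (case a of (i, j, k) \<Rightarrow> (st i, k, j)) of (i, j, k) \<Rightarrow> ad (scal C (V k) (cp (pihat (opA C I V st b d x) i j k) (picheck y i j k)))
            (scal C (V k) (cp (pihat y i j k) (picheck (opA C I V st b d x) i j k)))) =
        (case a of (i, j, k) \<Rightarrow> ad (scal C (V k) (cp (pihat x i j k) (picheck (zA y) i j k)))
            (scal C (V k) (cp (pihat (zA y) i j k) (picheck x i j k))))"
    unfolding ijk(1) using l c h ijk x y by (simp add: psiA_def phiA_def ad_comm)
qed

lemma transpA: assumes y: "y \<in> Hspace C I V" shows "transp C I V (opA C I V st b d) y = zA y"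
  by (rule transp_eq) (use zA_H[OF y] zA_prop[OF y] in auto)

definition phiB where "phiB y i j k f = scal C (V i) (cp (pihat y k (st j) i) (cp (tm f (ii (V (st j)))) (tm (ii (V i)) (b j))))"
definition psiB where "psiB y i j k g = scal C (V i) (cp (tm (ii (V i)) (d j)) (cp (tm g (ii (V (st j)))) (picheck y k (st j) i)))"

lemma repB_chk: assumes y: "y \<in> Hspace C I V" and ijk: "i \<in> I" "j \<in> I" "k \<in> I"
  shows "\<exists>c. ty c (V k) (to (V i) (V j)) \<and> (\<forall>f. ty f (to (V i) (V j)) (V k) \<longrightarrow> scal C (V k) (cp f c) = phiB y i j k f)"
proof -
  note L = LIN2[of i "V (st j)" "to (V i) (V j)" "V k" "pihat y k (st j) i" "tm (ii (V i)) (b j)"]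
  have L': "\<And>f. ty f (to (V i) (V j)) (V k) \<Longrightarrow> ty (scal C (V i) (cp (pihat y k (st j) i) (cp (tm f (ii (V (st j)))) (tm (ii (V i)) (b j))))) U U"
    "\<And>f g. ty f (to (V i) (V j)) (V k) \<Longrightarrow> ty g (to (V i) (V j)) (V k) \<Longrightarrow> scal C (V i) (cp (pihat y k (st j) i) (cp (tm (ad f g) (ii (V (st j)))) (tm (ii (V i)) (b j))))
        = ad (scal C (V i) (cp (pihat y k (st j) i) (cp (tm f (ii (V (st j)))) (tm (ii (V i)) (b j))))) (scal C (V i) (cp (pihat y k (st j) i) (cp (tm g (ii (V (st j)))) (tm (ii (V i)) (b j)))))"
    "\<And>s f. ty s U U \<Longrightarrow> ty f (to (V i) (V j)) (V k) \<Longrightarrow> scal C (V i) (cp (pihat y k (st j) i) (cp (tm (tm s f) (ii (V (st j)))) (tm (ii (V i)) (b j))))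
        = cp s (scal C (V i) (cp (pihat y k (st j) i) (cp (tm f (ii (V (st j)))) (tm (ii (V i)) (b j)))))"
    using L y ijk by simp_all
  show ?thesis unfolding phiB_def by (rule REPc[OF ijk L'])
qed

lemma repB_hat: assumes y: "y \<in> Hspace C I V" and ijk: "i \<in> I" "j \<in> I" "k \<in> I"
  shows "\<exists>h. ty h (to (V i) (V j)) (V k) \<and> (\<forall>g. ty g (V k) (to (V i) (V j)) \<longrightarrow> scal C (V k) (cp h g) = psiB y i j k g)"
proof -
  note L = LIN2[of i "V (st j)" "V k" "to (V i) (V j)" "tm (ii (V i)) (d j)" "picheck y k (st j) i"]
  have L': "\<And>f. ty f (V k) (to (V i) (V j)) \<Longrightarrow> ty (scal C (V i) (cp (tm (ii (V i)) (d j)) (cp (tm f (ii (V (st j)))) (picheck y k (st j) i)))) U U"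
    "\<And>f g. ty f (V k) (to (V i) (V j)) \<Longrightarrow> ty g (V k) (to (V i) (V j)) \<Longrightarrow> scal C (V i) (cp (tm (ii (V i)) (d j)) (cp (tm (ad f g) (ii (V (st j)))) (picheck y k (st j) i)))
        = ad (scal C (V i) (cp (tm (ii (V i)) (d j)) (cp (tm f (ii (V (st j)))) (picheck y k (st j) i)))) (scal C (V i) (cp (tm (ii (V i)) (d j)) (cp (tm g (ii (V (st j)))) (picheck y k (st j) i))))"
    "\<And>s f. ty s U U \<Longrightarrow> ty f (V k) (to (V i) (V j)) \<Longrightarrow> scal C (V i) (cp (tm (ii (V i)) (d j)) (cp (tm (tm s f) (ii (V (st j)))) (picheck y k (st j) i)))
        = cp s (scal C (V i) (cp (tm (ii (V i)) (d j)) (cp (tm f (ii (V (st j)))) (picheck y k (st j) i))))"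
    using L y ijk by simp_all
  show ?thesis unfolding psiB_def by (rule REPh[OF ijk L'])
qed


definition zB where "zB y = (
  (\<lambda>i j k. if i \<in> I \<and> j \<in> I \<and> k \<in> I then
     (if picheck y k (st j) i = zr (V i) (to (V k) (V (st j))) then zr (to (V i) (V j)) (V k)
      else (SOME h. ty h (to (V i) (V j)) (V k) \<and> (\<forall>g. ty g (V k) (to (V i) (V j)) \<longrightarrow> scal C (V k) (cp h g) = psiB y i j k g)))
     else undefined),
  (\<lambda>i j k. if i \<in> I \<and> j \<in> I \<and> k \<in> I then
     (if pihat y k (st j) i = zr (to (V k) (V (st j))) (V i) then zr (V k) (to (V i) (V j))
      else (SOME c. ty c (V k) (to (V i) (V j)) \<and> (\<forall>f. ty f (to (V i) (V j)) (V k) \<longrightarrow> scal C (V k) (cp f c) = phiB y i j k f)))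
     else undefined))"

lemma zB_hat: assumes y: "y \<in> Hspace C I V" and ijk: "i \<in> I" "j \<in> I" "k \<in> I"
  shows "ty (pihat (zB y) i j k) (to (V i) (V j)) (V k) \<and>
    (\<forall>g. ty g (V k) (to (V i) (V j)) \<longrightarrow> scal C (V k) (cp (pihat (zB y) i j k) g) = psiB y i j k g)"
proof (cases "picheck y k (st j) i = zr (V i) (to (V k) (V (st j)))")
  case True
  then show ?thesis using ijk y unfolding zB_def pihat_def[of "(_, _)"] psiB_def by simp
next
  case False
  then have e: "pihat (zB y) i j k = (SOME h. ty h (to (V i) (V j)) (V k) \<and> (\<forall>g. ty g (V k) (to (V i) (V j)) \<longrightarrow> scal C (V k) (cp h g) = psiB y i j k g))"
    using ijk unfolding zB_def pihat_def[of "(_, _)"] by simp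
  show ?thesis unfolding e by (rule someI_ex[OF repB_hat[OF y ijk]])
qed

lemma zB_chk: assumes y: "y \<in> Hspace C I V" and ijk: "i \<in> I" "j \<in> I" "k \<in> I"
  shows "ty (picheck (zB y) i j k) (V k) (to (V i) (V j)) \<and>
    (\<forall>f. ty f (to (V i) (V j)) (V k) \<longrightarrow> scal C (V k) (cp f (picheck (zB y) i j k)) = phiB y i j k f)"
proof (cases "pihat y k (st j) i = zr (to (V k) (V (st j))) (V i)")
  case True
  then show ?thesis using ijk y unfolding zB_def picheck_def[of "(_, _)"] phiB_def by simp
next
  case False
  then have e: "picheck (zB y) i j k = (SOME c. ty c (V k) (to (V i) (V j)) \<and> (\<forall>f. ty f (to (V i) (V j)) (V k) \<longrightarrow> scal C (V k) (cp f c) = phiB y i j k f))"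
    using ijk unfolding zB_def picheck_def[of "(_, _)"] by simp
  show ?thesis unfolding e by (rule someI_ex[OF repB_chk[OF y ijk]])
qed

lemma zB_H: assumes y: "y \<in> Hspace C I V" shows "zB y \<in> Hspace C I V"
proof -
  let ?hy = "{(a, c, e). a \<in> I \<and> c \<in> I \<and> e \<in> I \<and> pihat y a c e \<noteq> zr (to (V a) (V c)) (V e)}"
  let ?cy = "{(a, c, e). a \<in> I \<and> c \<in> I \<and> e \<in> I \<and> picheck y a c e \<noteq> zr (V e) (to (V a) (V c))}"
  have fy: "finite ?hy" "finite ?cy" using y unfolding Hspace_def by auto
  have s1: "{(i, j, k). i \<in> I \<and> j \<in> I \<and> k \<in> I \<and> pihat (zB y) i j k \<noteq> zr (to (V i) (V j)) (V k)}
     \<subseteq> (\<lambda>(a, c, e). (e, st c, a)) ` ?cy"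
  proof
    fix t assume t: "t \<in> {(i, j, k). i \<in> I \<and> j \<in> I \<and> k \<in> I \<and> pihat (zB y) i j k \<noteq> zr (to (V i) (V j)) (V k)}"
    then obtain i j k where ijk: "t = (i, j, k)" "i \<in> I" "j \<in> I" "k \<in> I" "pihat (zB y) i j k \<noteq> zr (to (V i) (V j)) (V k)" by auto
    then have "picheck y k (st j) i \<noteq> zr (V i) (to (V k) (V (st j)))" unfolding zB_def pihat_def[of "(_, _)"] by auto
    then have "(k, st j, i) \<in> ?cy" using ijk by auto
    moreover have "t = (\<lambda>(a, c, e). (e, st c, a)) (k, st j, i)" using ijk by simp
    ultimately show "t \<in> (\<lambda>(a, c, e). (e, st c, a)) ` ?cy" by blast
  qed
  have s2: "{(i, j, k). i \<in> I \<and> j \<in> I \<and> k \<in> I \<and> picheck (zB y) i j k \<noteq> zr (V k) (to (V i) (V j))}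
     \<subseteq> (\<lambda>(a, c, e). (e, st c, a)) ` ?hy"
  proof
    fix t assume t: "t \<in> {(i, j, k). i \<in> I \<and> j \<in> I \<and> k \<in> I \<and> picheck (zB y) i j k \<noteq> zr (V k) (to (V i) (V j))}"
    then obtain i j k where ijk: "t = (i, j, k)" "i \<in> I" "j \<in> I" "k \<in> I" "picheck (zB y) i j k \<noteq> zr (V k) (to (V i) (V j))" by auto
    then have "pihat y k (st j) i \<noteq> zr (to (V k) (V (st j))) (V i)" unfolding zB_def picheck_def[of "(_, _)"] by auto
    then have "(k, st j, i) \<in> ?hy" using ijk by auto
    moreover have "t = (\<lambda>(a, c, e). (e, st c, a)) (k, st j, i)" using ijk by simp
    ultimately show "t \<in> (\<lambda>(a, c, e). (e, st c, a)) ` ?hy" by blast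
  qed
  have f1: "finite {(i, j, k). i \<in> I \<and> j \<in> I \<and> k \<in> I \<and> pihat (zB y) i j k \<noteq> zr (to (V i) (V j)) (V k)}"
    by (rule finite_subset[OF s1]) (use fy in blast)
  have f2: "finite {(i, j, k). i \<in> I \<and> j \<in> I \<and> k \<in> I \<and> picheck (zB y) i j k \<noteq> zr (V k) (to (V i) (V j))}"
    by (rule finite_subset[OF s2]) (use fy in blast)
  show ?thesis unfolding Hspace_def mem_Collect_eq
  proof (intro conjI)
    show "\<forall>i\<in>I. \<forall>j\<in>I. \<forall>k\<in>I. pihat (zB y) i j k \<in> Hom C (to (V i) (V j)) (V k) \<and>
        picheck (zB y) i j k \<in> Hom C (V k) (to (V i) (V j))"
      using zB_hat[OF y] zB_chk[OF y] by simp
    show "\<forall>i j k. \<not> (i \<in> I \<and> j \<in> I \<and> k \<in> I) \<longrightarrow> pihat (zB y) i j k = undefined \<and> picheck (zB y) i j k = undefined"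
      unfolding zB_def pihat_def picheck_def by auto
  qed (use f1 f2 in auto)
qed

lemma zB_prop: assumes y: "y \<in> Hspace C I V" and x: "x \<in> Hspace C I V"
  shows "hform C I V (opB C I V st b d x) y = hform C I V x (zB y)"
  unfolding hform_def
proof (rule KS_reindex[where h="\<lambda>(i, j, k). (k, st j, i)"])
  show "bij_betw (\<lambda>(i, j, k). (k, st j, i)) (I \<times> I \<times> I) (I \<times> I \<times> I)" by (rule bij_inv) auto
  fix a assume a: "a \<in> I \<times> I \<times> I"
  then obtain i j k where ijk: "a = (i, j, k)" "i \<in> I" "j \<in> I" "k \<in> I" by auto
  have c: "scal C (V k) (cp (pihat x i j k) (picheck (zB y) i j k)) = phiB y i j k (pihat x i j k)"
    using zB_chk[OF y ijk(2-4)] x ijk by simp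
  have h: "scal C (V k) (cp (pihat (zB y) i j k) (picheck x i j k)) = psiB y i j k (picheck x i j k)"
    using zB_hat[OF y ijk(2-4)] x ijk by simp
  have l: "(case (k, st j, i) of (i, j, k) \<Rightarrow> ad (scal C (V k) (cp (pihat (opB C I V st b d x) i j k) (picheck y i j k)))
            (scal C (V k) (cp (pihat y i j k) (picheck (opB C I V st b d x) i j k))))
     = ad (psiB y i j k (picheck x i j k)) (phiB y i j k (pihat x i j k))"
    using ijk x y by (simp add: pihat_opB picheck_opB psiB_def phiB_def)
  show "(case (case a of (i, j, k) \<Rightarrow> (k, st j, i)) of (i, j, k) \<Rightarrow> ad (scal C (V k) (cp (pihat (opB C I V st b d x) i j k) (picheck y i j k)))
            (scal C (V k) (cp (pihat y i j k) (picheck (opB C I V st b d x) i j k)))) =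
        (case a of (i, j, k) \<Rightarrow> ad (scal C (V k) (cp (pihat x i j k) (picheck (zB y) i j k)))
            (scal C (V k) (cp (pihat (zB y) i j k) (picheck x i j k))))"
    unfolding ijk(1) using l c h ijk x y by (simp add: psiB_def phiB_def ad_comm)
qed

lemma transpB: assumes y: "y \<in> Hspace C I V" shows "transp C I V (opB C I V st b d) y = zB y"
  by (rule transp_eq) (use zB_H[OF y] zB_prop[OF y] in auto)

end

context psi begin

lemma termA: assumes H: "u \<in> Hspace C I V" "v \<in> Hspace C I V" "x \<in> Hspace C I V" "y \<in> Hspace C I V"
  and I: "i \<in> I" "j \<in> I" "k \<in> I" "l \<in> I" "m \<in> I" "n \<in> I"
  shows "scal C (V n) (cp (pihat y (st i) m n) (cp (tm (ii (V (st i))) (pihat u k l m)) (cp (tm (picheck (opA C I V st b d v) (st i) k j) (ii (V l))) (picheck x j l n))))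
   = scal C (V m) (cp (pihat u k l m) (cp (tm (pihat v i j k) (ii (V l))) (cp (tm (ii (V i)) (picheck x j l n)) (picheck (zA y) i n m))))"
proof -
  define E where "E = cp (pihat u k l m) (cp (tm (pihat v i j k) (ii (V l))) (tm (ii (V i)) (picheck x j l n)))"
  have Et: "ty E (to (V i) (V n)) (V m)" unfolding E_def using H I by simp
  have zH: "zA y \<in> Hspace C I V" by (rule zA_H[OF H(4)])
  have "scal C (V m) (cp E (picheck (zA y) i n m)) = hform C I V (sgh i n m E) (zA y)"
    using hform_sgh[OF zH I(1,6,5)] Et by simp
  also have "\<dots> = hform C I V (opA C I V st b d (sgh i n m E)) y"
    using zA_prop[OF H(4) sgh_H[of i n m E]] Et I by simp
  also have "\<dots> = hform C I V (sgc (st i) m n (cp (tm (ii (V (st i))) E) (tm (b (st i)) (ii (V n))))) y"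
    using opA_sgh[of i n m E] Et I by simp
  also have "\<dots> = scal C (V n) (cp (pihat y (st i) m n) (cp (tm (ii (V (st i))) E) (tm (b (st i)) (ii (V n)))))"
    using hform_sgc[OF H(4), of "st i" m n] Et I by simp
  finally have e: "scal C (V m) (cp E (picheck (zA y) i n m)) = scal C (V n) (cp (pihat y (st i) m n) (cp (tm (ii (V (st i))) E) (tm (b (st i)) (ii (V n)))))" .
  have l: "scal C (V m) (cp (pihat u k l m) (cp (tm (pihat v i j k) (ii (V l))) (cp (tm (ii (V i)) (picheck x j l n)) (picheck (zA y) i n m))))
     = scal C (V m) (cp E (picheck (zA y) i n m))"
    unfolding E_def using H I zA_chk[OF H(4) I(1,6,5)] by simp
  have r: "cp (pihat y (st i) m n) (cp (tm (ii (V (st i))) E) (tm (b (st i)) (ii (V n)))) =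
     cp (pihat y (st i) m n) (cp (tm (ii (V (st i))) (pihat u k l m)) (cp (tm (picheck (opA C I V st b d v) (st i) k j) (ii (V l))) (picheck x j l n)))"
    unfolding E_def using H I by (simp add: picheck_opA slides slides45 zigs)
  show ?thesis using l e r by simp
qed

lemma termB: assumes H: "u \<in> Hspace C I V" "v \<in> Hspace C I V" "x \<in> Hspace C I V" "y \<in> Hspace C I V"
  and I: "i \<in> I" "j \<in> I" "k \<in> I" "l \<in> I" "m \<in> I" "n \<in> I"
  shows "scal C (V k) (cp (pihat u m (st l) k) (cp (tm (pihat v i n m) (ii (V (st l)))) (cp (tm (ii (V i)) (picheck x n (st l) j)) (picheck y i j k))))
   = scal C (V m) (cp (pihat v i n m) (cp (tm (ii (V i)) (pihat (opB C I V st b d x) j l n)) (cp (tm (picheck y i j k) (ii (V l))) (picheck (zB u) k l m))))"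
proof -
  define G where "G = cp (pihat v i n m) (cp (tm (ii (V i)) (pihat (opB C I V st b d x) j l n)) (tm (picheck y i j k) (ii (V l))))"
  have Gt: "ty G (to (V k) (V l)) (V m)" unfolding G_def using H I by (simp add: pihat_opB)
  have zH: "zB u \<in> Hspace C I V" by (rule zB_H[OF H(1)])
  have "scal C (V m) (cp G (picheck (zB u) k l m)) = hform C I V (sgh k l m G) (zB u)"
    using hform_sgh[OF zH I(3,4,5)] Gt by simp
  also have "\<dots> = hform C I V (opB C I V st b d (sgh k l m G)) u"
    using zB_prop[OF H(1) sgh_H[of k l m G]] Gt I by simp
  also have "\<dots> = hform C I V (sgc m (st l) k (cp (tm G (ii (V (st l)))) (tm (ii (V k)) (b l)))) u"
    using opB_sgh[of k l m G] Gt I by simp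
  also have "\<dots> = scal C (V k) (cp (pihat u m (st l) k) (cp (tm G (ii (V (st l)))) (tm (ii (V k)) (b l))))"
    using hform_sgc[OF H(1), of m "st l" k] Gt I by simp
  finally have e: "scal C (V m) (cp G (picheck (zB u) k l m)) = scal C (V k) (cp (pihat u m (st l) k) (cp (tm G (ii (V (st l)))) (tm (ii (V k)) (b l))))" .
  have l: "scal C (V m) (cp (pihat v i n m) (cp (tm (ii (V i)) (pihat (opB C I V st b d x) j l n)) (cp (tm (picheck y i j k) (ii (V l))) (picheck (zB u) k l m))))
     = scal C (V m) (cp G (picheck (zB u) k l m))"
    unfolding G_def using H I zB_chk[OF H(1) I(3,4,5)] by (simp add: pihat_opB)
  have r: "cp (pihat u m (st l) k) (cp (tm G (ii (V (st l)))) (tm (ii (V k)) (b l))) =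
     cp (pihat u m (st l) k) (cp (tm (pihat v i n m) (ii (V (st l)))) (cp (tm (ii (V i)) (picheck x n (st l) j)) (picheck y i j k)))"
    unfolding G_def using H I by (simp add: pihat_opB slides slides45 zigs)
  show ?thesis using l e r by simp
qed

lemma termii: assumes H: "u \<in> Hspace C I V" "v \<in> Hspace C I V" "x \<in> Hspace C I V" "y \<in> Hspace C I V"
  and I: "i \<in> I" "j \<in> I" "k \<in> I" "l \<in> I" "m \<in> I" "n \<in> I"
  shows "scal C (V m) (cp (pihat u i n m) (cp (tm (pihat x k (st j) i) (ii (V n))) (cp (tm (ii (V k)) (picheck v (st j) n l)) (picheck y k l m))))
   = scal C (V m) (cp (pihat u i n m) (cp (tm (ii (V i)) (pihat (opA C I V st b d v) j l n)) (cp (tm (picheck (opB C I V st b d x) i j k) (ii (V l))) (picheck y k l m))))"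
proof -
  have "cp (pihat u i n m) (cp (tm (ii (V i)) (pihat (opA C I V st b d v) j l n)) (cp (tm (picheck (opB C I V st b d x) i j k) (ii (V l))) (picheck y k l m)))
     = cp (pihat u i n m) (cp (tm (pihat x k (st j) i) (ii (V n))) (cp (tm (ii (V k)) (picheck v (st j) n l)) (picheck y k l m)))"
    using H I by (simp add: pihat_opA picheck_opB slides slides45 zigs)
  then show ?thesis by simp
qed

lemma main_i: assumes H: "u \<in> Hspace C I V" "v \<in> Hspace C I V" "x \<in> Hspace C I V" "y \<in> Hspace C I V"
  shows "Tform C I V u v x (transp C I V (opA C I V st b d) y) = Tbar C I V y u (opA C I V st b d v) x"
proof -
  have "Tbar C I V y u (opA C I V st b d v) x = Tform C I V u v x (zA y)"
    unfolding Tbar_def Tform_def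
  proof (rule KS_reindex[where h="\<lambda>(i, j, k, l, m, n). (st i, k, j, l, n, m)"])
    show "bij_betw (\<lambda>(i, j, k, l, m, n). (st i, k, j, l, n, m)) (I \<times> I \<times> I \<times> I \<times> I \<times> I) (I \<times> I \<times> I \<times> I \<times> I \<times> I)"
      by (rule bij_inv) auto
    fix a assume "a \<in> I \<times> I \<times> I \<times> I \<times> I \<times> I"
    then obtain i j k l m n where a: "a = (i, j, k, l, m, n)" "i \<in> I" "j \<in> I" "k \<in> I" "l \<in> I" "m \<in> I" "n \<in> I" by auto
    show "(case (case a of (i, j, k, l, m, n) \<Rightarrow> (st i, k, j, l, n, m)) of
           (i, j, k, l, m, n) \<Rightarrow> scal C (V m) (cp (pihat y i n m) (cp (tm (ii (V i)) (pihat u j l n))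
             (cp (tm (picheck (opA C I V st b d v) i j k) (ii (V l))) (picheck x k l m))))) =
          (case a of (i, j, k, l, m, n) \<Rightarrow> scal C (V m) (cp (pihat u k l m) (cp (tm (pihat v i j k) (ii (V l)))
             (cp (tm (ii (V i)) (picheck x j l n)) (picheck (zA y) i n m)))))"
      unfolding a(1) using termA[OF H a(2-7)] by simp
  qed
  then show ?thesis using transpA[OF H(4)] by simp
qed

lemma main_ii: assumes H: "u \<in> Hspace C I V" "v \<in> Hspace C I V" "x \<in> Hspace C I V" "y \<in> Hspace C I V"
  shows "Tform C I V u x v y = Tbar C I V u (opA C I V st b d v) (opB C I V st b d x) y"
  unfolding Tbar_def Tform_def
proof (rule KS_reindex[where h="\<lambda>(i, j, k, l, m, n). (k, st j, i, n, m, l)"])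
  show "bij_betw (\<lambda>(i, j, k, l, m, n). (k, st j, i, n, m, l)) (I \<times> I \<times> I \<times> I \<times> I \<times> I) (I \<times> I \<times> I \<times> I \<times> I \<times> I)"
    by (rule bij_inv) auto
  fix a assume "a \<in> I \<times> I \<times> I \<times> I \<times> I \<times> I"
  then obtain i j k l m n where a: "a = (i, j, k, l, m, n)" "i \<in> I" "j \<in> I" "k \<in> I" "l \<in> I" "m \<in> I" "n \<in> I" by auto
  show "(case (case a of (i, j, k, l, m, n) \<Rightarrow> (k, st j, i, n, m, l)) of
         (i, j, k, l, m, n) \<Rightarrow> scal C (V m) (cp (pihat u k l m) (cp (tm (pihat x i j k) (ii (V l)))
           (cp (tm (ii (V i)) (picheck v j l n)) (picheck y i n m))))) =
        (case a of (i, j, k, l, m, n) \<Rightarrow> scal C (V m) (cp (pihat u i n m) (cp (tm (ii (V i)) (pihat (opA C I V st b d v) j l n))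
           (cp (tm (picheck (opB C I V st b d x) i j k) (ii (V l))) (picheck y k l m)))))"
    unfolding a(1) using termii[OF H a(2-7)] by simp
qed

lemma main_iii: assumes H: "u \<in> Hspace C I V" "v \<in> Hspace C I V" "x \<in> Hspace C I V" "y \<in> Hspace C I V"
  shows "Tform C I V u v x y = Tbar C I V v (opB C I V st b d x) y (transp C I V (opB C I V st b d) u)"
proof -
  have "Tform C I V u v x y = Tbar C I V v (opB C I V st b d x) y (zB u)"
    unfolding Tbar_def Tform_def
  proof (rule KS_reindex[where h="\<lambda>(i, j, k, l, m, n). (i, n, m, st l, k, j)"])
    show "bij_betw (\<lambda>(i, j, k, l, m, n). (i, n, m, st l, k, j)) (I \<times> I \<times> I \<times> I \<times> I \<times> I) (I \<times> I \<times> I \<times> I \<times> I \<times> I)"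
      by (rule bij_inv) auto
    fix a assume "a \<in> I \<times> I \<times> I \<times> I \<times> I \<times> I"
    then obtain i j k l m n where a: "a = (i, j, k, l, m, n)" "i \<in> I" "j \<in> I" "k \<in> I" "l \<in> I" "m \<in> I" "n \<in> I" by auto
    show "(case (case a of (i, j, k, l, m, n) \<Rightarrow> (i, n, m, st l, k, j)) of
           (i, j, k, l, m, n) \<Rightarrow> scal C (V m) (cp (pihat u k l m) (cp (tm (pihat v i j k) (ii (V l)))
             (cp (tm (ii (V i)) (picheck x j l n)) (picheck y i n m))))) =
          (case a of (i, j, k, l, m, n) \<Rightarrow> scal C (V m) (cp (pihat v i n m) (cp (tm (ii (V i)) (pihat (opB C I V st b d x) j l n))
             (cp (tm (picheck y i j k) (ii (V l))) (picheck (zB u) k l m)))))"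
      unfolding a(1) using termB[OF H a(2-7)] by simp
  qed
  then show ?thesis using transpB[OF H(1)] by simp
qed

end

theorem lemma2p1:
  fixes C :: "('o, 'm) mcat" and I :: "'i set" and V :: "'i \<Rightarrow> 'o"
    and st :: "'i \<Rightarrow> 'i" and b d :: "'i \<Rightarrow> 'm"
  assumes psi: "psi_system C I V st b d"
    and u: "u \<in> Hspace C I V" and v: "v \<in> Hspace C I V"
    and x: "x \<in> Hspace C I V" and y: "y \<in> Hspace C I V"
  shows "(Tform C I V u v x (transp C I V (opA C I V st b d) y)
           = Tbar C I V y u (opA C I V st b d v) x) \<and>
         (Tform C I V u x v y
           = Tbar C I V u (opA C I V st b d v) (opB C I V st b d x) y) \<and>
         (Tform C I V u v x y
           = Tbar C I V v (opB C I V st b d x) y (transp C I V (opB C I V st b d) u))"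
proof -
  interpret PS: psi C I V st b d by unfold_locales (rule psi)
  show ?thesis using PS.main_i[OF u v x y] PS.main_ii[OF u v x y] PS.main_iii[OF u v x y] by blast
qed

end
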